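(* Assume Hypothesis (H). Let $\mathfrak k,\mathfrak k'$ be Lie subalgebras with $\mathfrak h\subsetneq\mathfrak k'\subsetneq\mathfrak k\subset\mathfrak g$, set $\mathfrak j=\mathfrak g\ominus\mathfrak k$, $\mathfrak l=\mathfrak k\ominus\mathfrak k'$, $\mathfrak n=\mathfrak k'\ominus\mathfrak h$, $J_{\mathfrak j}=\{1,\dots,s\}\setminus J_{\mathfrak k}$, $J_{\mathfrak l}=J_{\mathfrak k}\setminus J_{\mathfrak k'}$. Let $g\in\mathcal M(\mathfrak k)$ and suppose the decomposition satisfies $g=\sum_{i\in J_{\mathfrak k}}x_i\,\pi_{\mathfrak m_i}^*Q$ with $x_i>0$. Then $$\hat S_{\mathfrak k}(g)=S(g|_{\mathfrak n})+S(g|_{\mathfrak l})-\frac12\sum_{i\in J_{\mathfrak k}}\sum_{j,k\in J_{\mathfrak j}}\frac{[ijk]}{x_i}-\frac14\sum_{i,j\in J_{\mathfrak l}}\sum_{k\in J_{\mathfrak k'}}[ijk]\Big(\frac{x_k}{x_ix_j}+2\frac{x_i}{x_jx_k}\Big),$$ and $$\hat S_{\mathfrak k}(g)\le\hat S_{\mathfrak k'}(g|_{\mathfrak n})+S(g|_{\mathfrak l}).$$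
   Context: Let $G$ be a compact connected Lie group with Lie algebra $\mathfrak g$ and $H<G$ a closed connected subgroup with Lie algebra $\mathfrak h$; $M=G/H$, $\dim M\ge3$. Fix an $\mathrm{Ad}(G)$-invariant inner product $Q$ on $\mathfrak g$; $\mathfrak v\ominus\mathfrak u$ is the $Q$-orthogonal complement, $\pi_{\mathfrak u}$ the $Q$-orthogonal projection, $\oplus$ the $Q$-orthogonal sum, $\mathfrak m=\mathfrak g\ominus\mathfrak h$. $B$ is the Killing form of $\mathfrak g$. Hypothesis (H): every Lie subalgebra $\mathfrak s\subset\mathfrak g$ with $\mathfrak h\subsetneq\mathfrak s$ satisfies (1) for all nonzero $\mathrm{Ad}(H)$-invariant subspaces $\mathfrak u\subset\mathfrak s\ominus\mathfrak h$ and $\mathfrak v\subset\mathfrak g\ominus\mathfrak s$, the representations $\mathrm{Ad}(H)|_{\mathfrak u}$ and $\mathrm{Ad}(H)|_{\mathfrak v}$ are inequivalent; (2) $[\mathfrak r,\mathfrak s]\neq\{0\}$ for every $\mathrm{Ad}(H)$-invariant one-dimensional subspace $\mathfrak r\subset\mathfrak g\ominus\mathfrak s$. $\mathfrak m=\mathfrak m_1\oplus\cdots\oplus\mathfrak m_s$ is a $Q$-orthogonal decomposition into $\mathrm{Ad}(H)$-invariant, $\mathrm{Ad}(H)$-irreducible subspaces; $[ijk]=\sum_{a,b}Q(\pi_{\mathfrak m_i}[e_a,f_b],\pi_{\mathfrak m_i}[e_a,f_b])$ with $(e_a),(f_b)$ $Q$-orthonormal bases of $\mathfrak m_j,\mathfrak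 m_k$. For a Lie subalgebra $\mathfrak k\supset\mathfrak h$, $J_{\mathfrak k}$ is the set of indices with $\mathfrak k\ominus\mathfrak h=\bigoplus_{j\in J_{\mathfrak k}}\mathfrak m_j$ (it exists under (H)). For an $\mathrm{Ad}(H)$-invariant inner product $g$ on a nonzero $\mathrm{Ad}(H)$-invariant subspace $\mathfrak u\subset\mathfrak m$, $S(g)=-\frac12\mathrm{tr}_gB|_{\mathfrak u}-\frac14\sum_{a,b}g(\pi_{\mathfrak u}[e_a,e_b],\pi_{\mathfrak u}[e_a,e_b])$, with $(e_a)$ a $g$-orthonormal basis of $\mathfrak u$ (for $\mathfrak u=\mathfrak m$ this is the scalar curvature). For a Lie subalgebra $\mathfrak k$ with $\mathfrak h\subsetneq\mathfrak k$, $\mathcal M(\mathfrak k)$ is the set of $\mathrm{Ad}(H)$-invariant inner products on $\mathfrak k\ominus\mathfrak h$, and for $g\in\mathcal M(\mathfrak k)$, $$\hat S_{\mathfrak k}(g)=S(g)-\frac12\sum_{a,b}Q\big(\pi_{\mathfrak g\ominus\mathfrak k}[e_a,f_b],\pi_{\mathfrak g\ominus\mathfrak k}[e_a,f_b]\big),$$ where $(e_a)$ is a $g$-orthonormal basis of $\mathfrak k\ominus\mathfrak h$ and $(f_b)$ a $Q$-orthonormal basis of $\mathfrak g\ominus\mathfrak k$ (so $\hat S_{\mathfrak g}=S$). *)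

theory Defs
  imports "HOL-Analysis.Analysis"
begin

(* The Lie algebra g is modelled by a Euclidean space 'a whose inner product is Q,
   with a Lie bracket br.  Ad(H)-notions are expressed through ad(h) (H connected). *)

definition ocomp :: "'a::euclidean_space set \<Rightarrow> 'a set \<Rightarrow> 'a set" where
  "ocomp V U = {x \<in> V. \<forall>y\<in>U. inner x y = 0}"

definition proj :: "'a::euclidean_space set \<Rightarrow> 'a \<Rightarrow> 'a" where
  "proj U x = (THE y. y \<in> U \<and> (\<forall>z\<in>U. inner (x - y) z = 0))"

definition lie_algebra :: "('a::euclidean_space \<Rightarrow> 'a \<Rightarrow> 'a) \<Rightarrow> bool" where
  "lie_algebra br \<longleftrightarrow> bilinear br \<and> (\<forall>x. br x x = 0) \<and>
     (\<forall>x y z. br x (br y z) + br y (br z x) + br z (br x y) = 0)"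

definition Q_ad_invariant :: "('a::euclidean_space \<Rightarrow> 'a \<Rightarrow> 'a) \<Rightarrow> bool" where
  "Q_ad_invariant br \<longleftrightarrow> (\<forall>x y z. inner (br x y) z + inner y (br x z) = 0)"

definition lie_subalg :: "('a::euclidean_space \<Rightarrow> 'a \<Rightarrow> 'a) \<Rightarrow> 'a set \<Rightarrow> bool" where
  "lie_subalg br S \<longleftrightarrow> subspace S \<and> (\<forall>x\<in>S. \<forall>y\<in>S. br x y \<in> S)"

definition killing :: "('a::euclidean_space \<Rightarrow> 'a \<Rightarrow> 'a) \<Rightarrow> 'a \<Rightarrow> 'a \<Rightarrow> real" where
  "killing br X Y = (\<Sum>b\<in>Basis. inner (br X (br Y b)) b)"

(* Ad(H)-invariance of a subspace (H connected: equivalent to ad(h)-invariance) *)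
definition h_inv :: "('a::euclidean_space \<Rightarrow> 'a \<Rightarrow> 'a) \<Rightarrow> 'a set \<Rightarrow> 'a set \<Rightarrow> bool" where
  "h_inv br h U \<longleftrightarrow> (\<forall>X\<in>h. \<forall>Y\<in>U. br X Y \<in> U)"

definition h_equiv :: "('a::euclidean_space \<Rightarrow> 'a \<Rightarrow> 'a) \<Rightarrow> 'a set \<Rightarrow> 'a set \<Rightarrow> 'a set \<Rightarrow> bool" where
  "h_equiv br h U V \<longleftrightarrow> (\<exists>T. linear T \<and> bij_betw T U V \<and>
      (\<forall>X\<in>h. \<forall>Y\<in>U. T (br X Y) = br X (T Y)))"

definition hypH :: "('a::euclidean_space \<Rightarrow> 'a \<Rightarrow> 'a) \<Rightarrow> 'a set \<Rightarrow> bool" where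
  "hypH br h \<longleftrightarrow> (\<forall>S. lie_subalg br S \<and> h \<subset> S \<longrightarrow>
      (\<forall>U V. subspace U \<and> subspace V \<and> U \<noteq> {0} \<and> V \<noteq> {0} \<and>
             U \<subseteq> ocomp S h \<and> V \<subseteq> ocomp UNIV S \<and> h_inv br h U \<and> h_inv br h V
             \<longrightarrow> \<not> h_equiv br h U V) \<and>
      (\<forall>R. subspace R \<and> dim R = 1 \<and> R \<subseteq> ocomp UNIV S \<and> h_inv br h R
             \<longrightarrow> (\<exists>X\<in>R. \<exists>Y\<in>S. br X Y \<noteq> 0)))"

definition h_irreducible :: "('a::euclidean_space \<Rightarrow> 'a \<Rightarrow> 'a) \<Rightarrow> 'a set \<Rightarrow> 'a set \<Rightarrow> bool" where
  "h_irreducible br h U \<longleftrightarrow> subspace U \<and> U \<noteq> {0} \<and> h_inv br h U \<and>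
     (\<forall>W. subspace W \<and> W \<subseteq> U \<and> h_inv br h W \<longrightarrow> W = {0} \<or> W = U)"

definition isotropy_decomp ::
  "('a::euclidean_space \<Rightarrow> 'a \<Rightarrow> 'a) \<Rightarrow> 'a set \<Rightarrow> nat \<Rightarrow> (nat \<Rightarrow> 'a set) \<Rightarrow> bool" where
  "isotropy_decomp br h s m \<longleftrightarrow> (\<forall>i\<in>{1..s}. h_irreducible br h (m i)) \<and>
     (\<forall>i\<in>{1..s}. \<forall>j\<in>{1..s}. i \<noteq> j \<longrightarrow> (\<forall>x\<in>m i. \<forall>y\<in>m j. inner x y = 0)) \<and>
     span (\<Union>i\<in>{1..s}. m i) = ocomp UNIV h"

definition Jidx :: "nat \<Rightarrow> (nat \<Rightarrow> 'a::euclidean_space set) \<Rightarrow> 'a set \<Rightarrow> 'a set \<Rightarrow> nat set" where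
  "Jidx s m h K = (THE J. J \<subseteq> {1..s} \<and> span (\<Union>j\<in>J. m j) = ocomp K h)"

definition onb :: "'a::euclidean_space set \<Rightarrow> 'a set" where
  "onb U = (SOME B. B \<subseteq> U \<and> pairwise orthogonal B \<and> (\<forall>x\<in>B. norm x = 1) \<and>
                     independent B \<and> span B = U)"

definition brkt :: "('a::euclidean_space \<Rightarrow> 'a \<Rightarrow> 'a) \<Rightarrow> (nat \<Rightarrow> 'a set) \<Rightarrow> nat \<Rightarrow> nat \<Rightarrow> nat \<Rightarrow> real" where
  "brkt br m i j k = (\<Sum>a\<in>onb (m j). \<Sum>b\<in>onb (m k). (norm (proj (m i) (br a b)))\<^sup>2)"

definition gonb :: "('a::euclidean_space \<Rightarrow> 'a \<Rightarrow> real) \<Rightarrow> 'a set \<Rightarrow> 'a set" where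
  "gonb gf U = (SOME B. finite B \<and> B \<subseteq> U \<and> span B = U \<and>
                   (\<forall>e\<in>B. \<forall>f\<in>B. gf e f = (if e = f then 1 else 0)))"

definition scal :: "('a::euclidean_space \<Rightarrow> 'a \<Rightarrow> 'a) \<Rightarrow> ('a \<Rightarrow> 'a \<Rightarrow> real) \<Rightarrow> 'a set \<Rightarrow> real" where
  "scal br gf U = - 1/2 * (\<Sum>e\<in>gonb gf U. killing br e e)
     - 1/4 * (\<Sum>a\<in>gonb gf U. \<Sum>b\<in>gonb gf U. gf (proj U (br a b)) (proj U (br a b)))"

definition Shat :: "('a::euclidean_space \<Rightarrow> 'a \<Rightarrow> 'a) \<Rightarrow> 'a set \<Rightarrow> ('a \<Rightarrow> 'a \<Rightarrow> real) \<Rightarrow> 'a set \<Rightarrow> real" where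
  "Shat br h gf K = scal br gf (ocomp K h)
     - 1/2 * (\<Sum>a\<in>gonb gf (ocomp K h). \<Sum>b\<in>onb (ocomp UNIV K).
                 (norm (proj (ocomp UNIV K) (br a b)))\<^sup>2)"

definition Mk :: "('a::euclidean_space \<Rightarrow> 'a \<Rightarrow> 'a) \<Rightarrow> 'a set \<Rightarrow> 'a set \<Rightarrow> ('a \<Rightarrow> 'a \<Rightarrow> real) \<Rightarrow> bool" where
  "Mk br h K gf \<longleftrightarrow> (let U = ocomp K h in
     (\<forall>x\<in>U. \<forall>y\<in>U. \<forall>z\<in>U. \<forall>c. gf (x + y) z = gf x z + gf y z \<and> gf (c *\<^sub>R x) z = c * gf x z) \<and>
     (\<forall>x\<in>U. \<forall>y\<in>U. gf x y = gf y x) \<and>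
     (\<forall>x\<in>U. x \<noteq> 0 \<longrightarrow> gf x x > 0) \<and>
     (\<forall>X\<in>h. \<forall>Y\<in>U. \<forall>Z\<in>U. gf (br X Y) Z + gf Y (br X Z) = 0))"

end

theory Submission
  imports Defs
begin

lemma proj_ex:
  fixes U :: "'a::euclidean_space set"
  assumes "subspace U"
  shows "proj U x \<in> U \<and> (\<forall>z\<in>U. inner (x - proj U x) z = 0)"
proof -
  obtain y z where y: "y \<in> span U" and z: "\<And>w. w \<in> span U \<Longrightarrow> orthogonal z w" and xyz: "x = y + z"
    using orthogonal_subspace_decomp_exists[of U x] by blast
  have yU: "y \<in> U" using y assms span_eq_iff by blast
  have zw: "inner (x - y) w = 0" if "w \<in> U" for w
    using z[of w] that span_base[of w U] xyz by (simp add: orthogonal_def)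
  have P: "y \<in> U \<and> (\<forall>w\<in>U. inner (x - y) w = 0)"
    using yU zw by blast
  have uniq: "y' = y" if "y' \<in> U \<and> (\<forall>w\<in>U. inner (x - y') w = 0)" for y'
  proof -
    have d: "y - y' \<in> U" using that yU assms subspace_diff by blast
    have "inner (x - y') (y - y') - inner (x - y) (y - y') = 0" using that P d by simp
    then have "inner (y - y') (y - y') = 0" by (simp add: inner_diff_left)
    then show ?thesis by simp
  qed
  have "proj U x = y" unfolding proj_def
    by (rule the_equality) (use P uniq in blast)+
  then show ?thesis using P by simp
qed
lemma proj_unique:
  fixes U :: "'a::euclidean_space set"
  assumes "subspace U" "y \<in> U" "\<forall>w\<in>U. inner (x - y) w = 0"
  shows "proj U x = y"
proof -
  have P: "proj U x \<in> U" "\<forall>w\<in>U. inner (x - proj U x) w = 0" using proj_ex[OF assms(1)] by auto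
  have d: "y - proj U x \<in> U" using P assms subspace_diff by blast
  have "inner (x - proj U x) (y - proj U x) - inner (x - y) (y - proj U x) = 0" using P assms d by simp
  then have "inner (y - proj U x) (y - proj U x) = 0" by (simp add: inner_diff_left)
  then show ?thesis by simp
qed

lemma proj_in: "subspace U \<Longrightarrow> proj U x \<in> U" using proj_ex by blast
lemma proj_orth: "subspace U \<Longrightarrow> z \<in> U \<Longrightarrow> inner (x - proj U x) z = 0" using proj_ex by blast
lemma proj_inner: "subspace U \<Longrightarrow> z \<in> U \<Longrightarrow> inner (proj U x) z = inner x z"
  using proj_orth[of U z x] by (simp add: inner_diff_left)
lemma proj_id: "subspace U \<Longrightarrow> u \<in> U \<Longrightarrow> proj U u = u"
  by (rule proj_unique) auto

lemma onb_props:
  fixes U :: "'a::euclidean_space set"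
  assumes "subspace U"
  shows "finite (onb U) \<and> onb U \<subseteq> U \<and> span (onb U) = U \<and>
         (\<forall>a\<in>onb U. \<forall>b\<in>onb U. inner a b = (if a = b then 1 else 0))"
proof -
  obtain B where "B \<subseteq> U" "pairwise orthogonal B" "\<And>x. x \<in> B \<Longrightarrow> norm x = 1"
     "independent B" "card B = dim U" "span B = U"
    using orthonormal_basis_subspace[OF assms] by metis
  then have ex: "\<exists>B. B \<subseteq> U \<and> pairwise orthogonal B \<and> (\<forall>x\<in>B. norm x = 1) \<and> independent B \<and> span B = U"
    by blast
  have S: "onb U \<subseteq> U \<and> pairwise orthogonal (onb U) \<and> (\<forall>x\<in>onb U. norm x = 1) \<and> independent (onb U) \<and> span (onb U) = U"
    unfolding onb_def using someI_ex[OF ex] .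
  have f: "finite (onb U)" using S independent_imp_finite by blast
  have "inner a b = (if a = b then 1 else 0)" if "a \<in> onb U" "b \<in> onb U" for a b
  proof (cases "a = b")
    case True then show ?thesis using S that by (simp add: dot_square_norm)
  next
    case False then show ?thesis using S that by (auto simp: pairwise_def orthogonal_def)
  qed
  then show ?thesis using S f by blast
qed

lemma fourier:
  fixes e :: "'i \<Rightarrow> 'a::euclidean_space"
  assumes fin: "finite I" and on: "\<forall>p\<in>I. \<forall>q\<in>I. inner (e p) (e q) = (if p = q then 1 else 0)"
    and u: "u \<in> span (e ` I)"
  shows "u = (\<Sum>p\<in>I. inner u (e p) *\<^sub>R e p)"
proof -
  define r where "r = u - (\<Sum>p\<in>I. inner u (e p) *\<^sub>R e p)"
  have rq: "inner r (e q) = 0" if "q \<in> I" for q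
  proof -
    have "inner (\<Sum>p\<in>I. inner u (e p) *\<^sub>R e p) (e q) = (\<Sum>p\<in>I. inner u (e p) * inner (e p) (e q))"
      by (simp add: inner_sum_left)
    also have "\<dots> = (\<Sum>p\<in>I. if p = q then inner u (e q) else 0)"
      by (rule sum.cong) (use on that in auto)
    also have "\<dots> = inner u (e q)" using fin that by simp
    finally show ?thesis unfolding r_def by (simp add: inner_diff_left)
  qed
  have rs: "r \<in> span (e ` I)" unfolding r_def
    by (intro span_diff u span_sum span_scale span_base) auto
  have "orthogonal r r" by (rule orthogonal_to_span[OF rs]) (use rq in \<open>auto simp: orthogonal_def\<close>)
  then have "r = 0" by (simp add: orthogonal_def)
  then show ?thesis unfolding r_def by simp
qed

lemma norm_proj_sq:
  fixes U :: "'a::euclidean_space set"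
  assumes "subspace U"
  shows "(norm (proj U v))\<^sup>2 = (\<Sum>c\<in>onb U. (inner v c)\<^sup>2)"
proof -
  have O: "finite (onb U)" "span (onb U) = U" "\<forall>a\<in>onb U. \<forall>b\<in>onb U. inner a b = (if a = b then 1 else 0)"
    "onb U \<subseteq> U" using onb_props[OF assms] by auto
  have pin: "proj U v \<in> span (id ` onb U)" using proj_in[OF assms] O by simp
  have F: "proj U v = (\<Sum>c\<in>onb U. inner (proj U v) c *\<^sub>R c)"
    using fourier[of "onb U" id, OF O(1) _ pin] O(3) by simp
  have "(norm (proj U v))\<^sup>2 = inner (proj U v) (proj U v)" by (simp add: dot_square_norm)
  also have "\<dots> = inner (proj U v) (\<Sum>c\<in>onb U. inner (proj U v) c *\<^sub>R c)" using F by simp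
  also have "\<dots> = (\<Sum>c\<in>onb U. (inner (proj U v) c)\<^sup>2)" by (simp add: inner_sum_right power2_eq_square)
  also have "\<dots> = (\<Sum>c\<in>onb U. (inner v c)\<^sup>2)"
    by (rule sum.cong) (use proj_inner[OF assms] O(4) in auto)
  finally show ?thesis .
qed


definition Gf :: "'i set \<Rightarrow> ('i \<Rightarrow> 'a::euclidean_space) \<Rightarrow> ('i \<Rightarrow> real) \<Rightarrow> 'a \<Rightarrow> 'a \<Rightarrow> real" where
  "Gf I e w u v = (\<Sum>p\<in>I. w p * inner u (e p) * inner v (e p))"

lemma Gf_sym: "Gf I e w u v = Gf I e w v u"
  unfolding Gf_def by (simp add: mult.commute mult.left_commute)

lemma Gf_sum_right: "Gf I e w u (\<Sum>b\<in>B. f b *\<^sub>R b) = (\<Sum>b\<in>B. f b * Gf I e w u b)"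
  unfolding Gf_def by (simp add: inner_sum_left sum_distrib_left sum_distrib_right algebra_simps sum.swap[of _ B])

lemma Gf_scale_right: "Gf I e w u (c *\<^sub>R v) = c * Gf I e w u v"
  unfolding Gf_def by (simp add: sum_distrib_left algebra_simps)

lemma Gf_basis:
  assumes fin: "finite I" and on: "\<forall>p\<in>I. \<forall>q\<in>I. inner (e p) (e q) = (if p = q then 1 else 0)"
    and "q \<in> I"
  shows "Gf I e w u (e q) = w q * inner u (e q)"
proof -
  have "Gf I e w u (e q) = (\<Sum>p\<in>I. if p = q then w q * inner u (e q) else 0)"
    unfolding Gf_def by (rule sum.cong) (use on assms(3) in \<open>auto simp: inner_commute\<close>)
  then show ?thesis using fin assms(3) by simp
qed

lemma trace_lemma:
  fixes e :: "'i \<Rightarrow> 'a::euclidean_space" and \<phi> :: "'a \<Rightarrow> 'a \<Rightarrow> real"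
  assumes fin: "finite I" and on: "\<forall>p\<in>I. \<forall>q\<in>I. inner (e p) (e q) = (if p = q then 1 else 0)"
    and wpos: "\<forall>p\<in>I. w p > 0"
    and finB: "finite B" and spB: "span B = span (e ` I)"
    and onB: "\<forall>b\<in>B. \<forall>b'\<in>B. Gf I e w b b' = (if b = b' then 1 else 0)"
    and bil: "bilinear \<phi>"
  shows "(\<Sum>b\<in>B. \<phi> b b) = (\<Sum>p\<in>I. \<phi> (e p) (e p) / w p)"
proof -
  let ?G = "Gf I e w"
  let ?W = "span (e ` I)"
  have BW: "b \<in> ?W" if "b \<in> B" for b using that spB span_base by blast
  have parse: "?G u v = (\<Sum>b\<in>B. ?G b u * ?G b v)" if u: "u \<in> ?W" for u v
  proof -
    obtain \<alpha> where ua: "u = (\<Sum>b\<in>B. \<alpha> b *\<^sub>R b)"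
      using u spB span_finite[OF finB] by auto
    have al: "?G b' u = \<alpha> b'" if "b' \<in> B" for b'
    proof -
      have "?G b' u = (\<Sum>b\<in>B. \<alpha> b * ?G b' b)" by (simp add: ua Gf_sum_right)
      also have "\<dots> = (\<Sum>b\<in>B. if b = b' then \<alpha> b' else 0)"
        by (rule sum.cong) (use onB that in auto)
      also have "\<dots> = \<alpha> b'" using finB that by simp
      finally show ?thesis .
    qed
    have "?G u v = ?G v u" by (rule Gf_sym)
    also have "\<dots> = (\<Sum>b\<in>B. \<alpha> b * ?G v b)" by (simp add: ua Gf_sum_right)
    also have "\<dots> = (\<Sum>b\<in>B. ?G b u * ?G b v)"
      by (rule sum.cong) (use al in \<open>auto simp: Gf_sym\<close>)
    finally show ?thesis .
  qed
  have QG: "inner b (e p) = ?G b ((1 / w p) *\<^sub>R e p)" if "p \<in> I" for b p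
  proof -
    have "w p > 0" using wpos that by blast
    then show ?thesis using Gf_basis[OF fin on that, of w b] by (simp add: Gf_scale_right)
  qed
  have SQ: "(\<Sum>b\<in>B. inner b (e p) * inner b (e q)) = (if p = q then 1 / w p else 0)"
    if p: "p \<in> I" and q: "q \<in> I" for p q
  proof -
    have "(\<Sum>b\<in>B. inner b (e p) * inner b (e q)) =
          (\<Sum>b\<in>B. ?G b ((1 / w p) *\<^sub>R e p) * ?G b ((1 / w q) *\<^sub>R e q))"
      using QG p q by simp
    also have "\<dots> = ?G ((1 / w p) *\<^sub>R e p) ((1 / w q) *\<^sub>R e q)"
      by (rule parse[symmetric]) (use p in \<open>auto intro: span_scale span_base\<close>)
    also have "\<dots> = (1 / w q) * (w q * inner ((1 / w p) *\<^sub>R e p) (e q))"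
      by (simp add: Gf_scale_right Gf_basis[OF fin on q])
    also have "\<dots> = (if p = q then 1 / w p else 0)"
      using on p q wpos by auto
    finally show ?thesis .
  qed
  have exp: "\<phi> b b = (\<Sum>(p, q)\<in>I \<times> I. inner b (e p) * inner b (e q) * \<phi> (e p) (e q))"
    if "b \<in> B" for b
  proof -
    have bf: "b = (\<Sum>p\<in>I. inner b (e p) *\<^sub>R e p)" by (rule fourier[OF fin on BW[OF that]])
    have "\<phi> b b = \<phi> (\<Sum>p\<in>I. inner b (e p) *\<^sub>R e p) (\<Sum>p\<in>I. inner b (e p) *\<^sub>R e p)"
      using bf by simp
    also have "\<dots> = (\<Sum>(p, q)\<in>I \<times> I. \<phi> (inner b (e p) *\<^sub>R e p) (inner b (e q) *\<^sub>R e q))"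
      by (rule bilinear_sum[OF bil])
    also have "\<dots> = (\<Sum>(p, q)\<in>I \<times> I. inner b (e p) * inner b (e q) * \<phi> (e p) (e q))"
      by (rule sum.cong) (auto simp: bilinear_lmul[OF bil] bilinear_rmul[OF bil])
    finally show ?thesis .
  qed
  have "(\<Sum>b\<in>B. \<phi> b b) = (\<Sum>b\<in>B. \<Sum>(p, q)\<in>I \<times> I. inner b (e p) * inner b (e q) * \<phi> (e p) (e q))"
    by (rule sum.cong) (use exp in auto)
  also have "\<dots> = (\<Sum>(p, q)\<in>I \<times> I. \<Sum>b\<in>B. inner b (e p) * inner b (e q) * \<phi> (e p) (e q))"
    using sum.swap[of "\<lambda>b (p, q). inner b (e p) * inner b (e q) * \<phi> (e p) (e q)" "I \<times> I" B]
    by (simp add: split_beta)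
  also have "\<dots> = (\<Sum>(p, q)\<in>I \<times> I. (\<Sum>b\<in>B. inner b (e p) * inner b (e q)) * \<phi> (e p) (e q))"
    by (simp add: sum_distrib_right case_prod_beta)
  also have "\<dots> = (\<Sum>(p, q)\<in>I \<times> I. (if p = q then 1 / w p else 0) * \<phi> (e p) (e q))"
    by (rule sum.cong) (use SQ in auto)
  also have "\<dots> = (\<Sum>p\<in>I. \<Sum>q\<in>I. (if p = q then 1 / w p else 0) * \<phi> (e p) (e q))"
    by (simp add: sum.cartesian_product)
  also have "\<dots> = (\<Sum>p\<in>I. \<phi> (e p) (e p) / w p)"
  proof (rule sum.cong)
    fix p assume p: "p \<in> I"
    have "(\<Sum>q\<in>I. (if p = q then 1 / w p else 0) * \<phi> (e p) (e q)) = (\<Sum>q\<in>I. if p = q then \<phi> (e p) (e p) / w p else 0)"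
      by (rule sum.cong) auto
    also have "\<dots> = \<phi> (e p) (e p) / w p" using fin p by simp
    finally show "(\<Sum>q\<in>I. (if p = q then 1 / w p else 0) * \<phi> (e p) (e q)) = \<phi> (e p) (e p) / w p" .
  qed simp
  finally show ?thesis .
qed


lemma Gf_onb_exists:
  fixes e :: "'i \<Rightarrow> 'a::euclidean_space"
  assumes fin: "finite I" and on: "\<forall>p\<in>I. \<forall>q\<in>I. inner (e p) (e q) = (if p = q then 1 else 0)"
    and wpos: "\<forall>p\<in>I. w p > 0"
  shows "\<exists>B. finite B \<and> B \<subseteq> span (e ` I) \<and> span B = span (e ` I) \<and>
             (\<forall>b\<in>B. \<forall>b'\<in>B. Gf I e w b b' = (if b = b' then 1 else 0))"
proof -
  define f where "f p = (1 / sqrt (w p)) *\<^sub>R e p" for p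
  have fe: "inner (f p) (e q) = (if p = q then 1 / sqrt (w p) else 0)" if "p \<in> I" "q \<in> I" for p q
    using on that by (simp add: f_def)
  have Gff: "Gf I e w (f p) (f q) = (if p = q then 1 else 0)" if p: "p \<in> I" and q: "q \<in> I" for p q
  proof -
    have wp: "w p > 0" using wpos p by blast
    have "Gf I e w (f p) (f q) = (1 / sqrt (w q)) * (w q * inner (f p) (e q))"
      by (simp add: f_def Gf_scale_right Gf_basis[OF fin on q])
    also have "\<dots> = (if p = q then 1 else 0)"
      using fe[OF p q] wp by (auto simp: field_simps)
    finally show ?thesis .
  qed
  have inj: "p = q" if "p \<in> I" "q \<in> I" "f p = f q" for p q
  proof (rule ccontr)
    assume "p \<noteq> q"
    have "inner (f p) (e p) = 1 / sqrt (w p)" using fe[of p p] that(1) by simp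
    moreover have "inner (f q) (e p) = 0" using fe[of q p] that \<open>p \<noteq> q\<close> by simp
    moreover have "w p > 0" using wpos that by blast
    ultimately show False using that by simp
  qed
  let ?B = "f ` I"
  have sub: "?B \<subseteq> span (e ` I)" unfolding f_def by (auto intro!: span_scale[OF span_base[OF imageI]])
  have "e ` I \<subseteq> span ?B"
  proof
    fix v assume "v \<in> e ` I"
    then obtain p where p: "p \<in> I" "v = e p" by blast
    have wp: "w p > 0" using wpos p by blast
    have "v = sqrt (w p) *\<^sub>R f p" using wp p by (simp add: f_def)
    then show "v \<in> span ?B" using p span_scale[OF span_base[OF imageI[of p I f]]] by simp
  qed
  then have "span (e ` I) \<subseteq> span ?B" by (simp add: span_minimal)
  moreover have "span ?B \<subseteq> span (e ` I)" using sub by (simp add: span_minimal)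
  ultimately have sp: "span ?B = span (e ` I)" by blast
  have orth: "\<forall>b\<in>?B. \<forall>b'\<in>?B. Gf I e w b b' = (if b = b' then 1 else 0)"
    using Gff inj by fastforce
  show ?thesis using fin sub sp orth by blast
qed

lemma Gf_one_inner:
  fixes e :: "'i \<Rightarrow> 'a::euclidean_space"
  assumes fin: "finite I" and on: "\<forall>p\<in>I. \<forall>q\<in>I. inner (e p) (e q) = (if p = q then 1 else 0)"
    and u: "u \<in> span (e ` I)"
  shows "Gf I e (\<lambda>_. 1) v u = inner v u"
proof -
  have "inner v u = inner v (\<Sum>p\<in>I. inner u (e p) *\<^sub>R e p)" using fourier[OF fin on u] by simp
  also have "\<dots> = Gf I e (\<lambda>_. 1) v u" by (simp add: Gf_def inner_sum_right mult.commute)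
  finally show ?thesis by simp
qed


lemma subspace_ocomp: "subspace V \<Longrightarrow> subspace (ocomp V U)"
  unfolding ocomp_def subspace_def by (auto simp: inner_add_left)

lemma proj_linear:
  fixes S :: "'a::euclidean_space set"
  assumes S: "subspace S"
  shows "linear (proj S)"
proof (rule linearI)
  fix x y
  show "proj S (x + y) = proj S x + proj S y"
  proof (rule proj_unique[OF S])
    show "proj S x + proj S y \<in> S" using S proj_in subspace_add by blast
    show "\<forall>w\<in>S. inner (x + y - (proj S x + proj S y)) w = 0"
    proof
      fix w assume w: "w \<in> S"
      have "inner (x + y - (proj S x + proj S y)) w = inner (x - proj S x) w + inner (y - proj S y) w"
        by (simp add: inner_diff_left inner_add_left)
      then show "inner (x + y - (proj S x + proj S y)) w = 0" using proj_orth[OF S w] by simp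
    qed
  qed
next
  fix c x
  show "proj S (c *\<^sub>R x) = c *\<^sub>R proj S x"
  proof (rule proj_unique[OF S])
    show "c *\<^sub>R proj S x \<in> S" using S proj_in subspace_scale by blast
    show "\<forall>w\<in>S. inner (c *\<^sub>R x - c *\<^sub>R proj S x) w = 0"
      using proj_orth[OF S] by (metis inner_scaleR_left mult_zero_right scaleR_right_diff_distrib)
  qed
qed

locale LS =
  fixes br :: "'a::euclidean_space \<Rightarrow> 'a \<Rightarrow> 'a" and h :: "'a set" and s :: nat and m :: "nat \<Rightarrow> 'a set"
  assumes lie: "lie_algebra br" and Qinv: "Q_ad_invariant br" and hsub: "lie_subalg br h"
    and H: "hypH br h" and dec: "isotropy_decomp br h s m"
begin

lemma bil: "bilinear br" using lie unfolding lie_algebra_def by blast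

lemma br_zero_right: "br X 0 = 0" using bilinear_rzero[OF bil] .
lemma br_zero_left: "br 0 X = 0" using bilinear_lzero[OF bil] .
lemma br_diff_right: "br X (a - b) = br X a - br X b" using bilinear_rsub[OF bil] .
lemma br_diff_left: "br (a - b) X = br a X - br b X" using bilinear_lsub[OF bil] .

lemma antisym: "br y x = - br x y"
proof -
  have "br (x + y) (x + y) = 0" using lie unfolding lie_algebra_def by blast
  moreover have "br x x = 0" "br y y = 0" using lie unfolding lie_algebra_def by blast+
  ultimately show ?thesis by (simp add: bilinear_ladd[OF bil] bilinear_radd[OF bil] eq_neg_iff_add_eq_0 add.commute)
qed

lemma inv: "inner (br x y) z = - inner y (br x z)"
  using Qinv unfolding Q_ad_invariant_def by (simp add: eq_neg_iff_add_eq_0)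

lemma cyc: "inner (br a b) c = inner (br c a) b"
  using inv[of a b c] antisym[of c a] by (simp add: inner_commute)

lemma m_sub: "i \<in> {1..s} \<Longrightarrow> subspace (m i)"
  using dec unfolding isotropy_decomp_def h_irreducible_def by blast
lemma m_nz: "i \<in> {1..s} \<Longrightarrow> m i \<noteq> {0}"
  using dec unfolding isotropy_decomp_def h_irreducible_def by blast
lemma m_inv: "i \<in> {1..s} \<Longrightarrow> X \<in> h \<Longrightarrow> Y \<in> m i \<Longrightarrow> br X Y \<in> m i"
  using dec unfolding isotropy_decomp_def h_irreducible_def h_inv_def by blast
lemma m_irr: "i \<in> {1..s} \<Longrightarrow> subspace W \<Longrightarrow> W \<subseteq> m i \<Longrightarrow> h_inv br h W \<Longrightarrow> W = {0} \<or> W = m i"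
  using dec unfolding isotropy_decomp_def h_irreducible_def by blast
lemma m_orth: "i \<in> {1..s} \<Longrightarrow> j \<in> {1..s} \<Longrightarrow> i \<noteq> j \<Longrightarrow> x \<in> m i \<Longrightarrow> y \<in> m j \<Longrightarrow> inner x y = 0"
  using dec unfolding isotropy_decomp_def by blast
lemma m_span: "span (\<Union>i\<in>{1..s}. m i) = ocomp UNIV h"
  using dec unfolding isotropy_decomp_def by blast
lemma m_perp_h: "i \<in> {1..s} \<Longrightarrow> x \<in> m i \<Longrightarrow> y \<in> h \<Longrightarrow> inner x y = 0"
proof -
  assume a: "i \<in> {1..s}" "x \<in> m i" "y \<in> h"
  have "x \<in> span (\<Union>i\<in>{1..s}. m i)" using span_base[OF UN_I[of i "{1..s}" x m, OF a(1) a(2)]] .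
  then show ?thesis using m_span a unfolding ocomp_def by blast
qed

end

context LS begin
lemma dichotomy:
  assumes S: "lie_subalg br S" and hS: "h \<subset> S" and i: "i \<in> {1..s}"
  shows "m i \<subseteq> S \<or> (\<forall>v\<in>m i. \<forall>z\<in>S. inner v z = 0)"
proof (rule ccontr)
  assume "\<not> ?thesis"
  then obtain v0 z0 where v0: "v0 \<in> m i" "v0 \<notin> S" and z0: "\<exists>v\<in>m i. z0 \<in> S \<and> inner v z0 \<noteq> 0"
    by blast
  have Ssub: "subspace S" using S unfolding lie_subalg_def by blast
  have Sbr: "x \<in> S \<Longrightarrow> y \<in> S \<Longrightarrow> br x y \<in> S" for x y using S unfolding lie_subalg_def by blast
  have hS': "h \<subseteq> S" using hS by blast
  define p where "p = proj S"
  define q where "q v = v - p v" for v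
  have pl: "linear p" unfolding p_def by (rule proj_linear[OF Ssub])
  have ql: "linear q" unfolding q_def[abs_def] using pl
    by (intro linearI) (auto simp: linear_add linear_scale algebra_simps)
  have peq: "p (br X v) = br X (p v)" if X: "X \<in> h" for X v
    unfolding p_def
  proof (rule proj_unique[OF Ssub])
    show "br X (proj S v) \<in> S" using Sbr[OF subsetD[OF hS' X] proj_in[OF Ssub]] .
    show "\<forall>w\<in>S. inner (br X v - br X (proj S v)) w = 0"
    proof
      fix w assume w: "w \<in> S"
      have "inner (br X v - br X (proj S v)) w = inner (br X (v - proj S v)) w" by (simp add: br_diff_right)
      also have "\<dots> = - inner (v - proj S v) (br X w)" by (rule inv)
      also have "\<dots> = 0" using proj_orth[OF Ssub Sbr[OF subsetD[OF hS' X] w]] by simp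
      finally show "inner (br X v - br X (proj S v)) w = 0" .
    qed
  qed
  have qeq: "q (br X v) = br X (q v)" if "X \<in> h" for X v
    unfolding q_def using peq[OF that] by (simp add: br_diff_right)
  have mi: "subspace (m i)" using m_sub i .
  define U where "U = p ` m i"
  define V where "V = q ` m i"
  have Us: "subspace U" unfolding U_def by (rule linear_subspace_image[OF pl mi])
  have Vs: "subspace V" unfolding V_def by (rule linear_subspace_image[OF ql mi])
  obtain v1 where v1: "v1 \<in> m i" "z0 \<in> S" "inner v1 z0 \<noteq> 0" using z0 by blast
  have "p v1 \<noteq> 0" using v1 proj_inner[OF Ssub v1(2), of v1] unfolding p_def by auto
  then have Unz: "U \<noteq> {0}" using v1 unfolding U_def by blast
  have "q v0 \<noteq> 0" using v0 proj_in[OF Ssub, of v0] unfolding q_def p_def by auto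
  then have Vnz: "V \<noteq> {0}" using v0 unfolding V_def by blast
  have UO: "U \<subseteq> ocomp S h"
  proof
    fix u assume "u \<in> U"
    then obtain y where y: "y \<in> m i" "u = p y" unfolding U_def by blast
    have "inner u z = 0" if "z \<in> h" for z
      using proj_inner[OF Ssub, of z y] hS' that m_perp_h[OF i y(1) that] y unfolding p_def by auto
    then show "u \<in> ocomp S h" using proj_in[OF Ssub] y unfolding ocomp_def p_def by blast
  qed
  have VO: "V \<subseteq> ocomp UNIV S"
  proof
    fix u assume "u \<in> V"
    then obtain y where "u = q y" unfolding V_def by blast
    then show "u \<in> ocomp UNIV S" using proj_orth[OF Ssub] by (simp add: ocomp_def q_def p_def)
  qed
  have Ui: "h_inv br h U" unfolding h_inv_def U_def
  proof (intro ballI)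
    fix X Y assume "X \<in> h" "Y \<in> p ` m i"
    then obtain y where "y \<in> m i" "Y = p y" by blast
    then have "br X Y = p (br X y)" using peq[OF \<open>X \<in> h\<close>, of y] by simp
    moreover have "br X y \<in> m i" using m_inv[OF i \<open>X \<in> h\<close> \<open>y \<in> m i\<close>] .
    ultimately show "br X Y \<in> p ` m i" by blast
  qed
  have Vi: "h_inv br h V" unfolding h_inv_def V_def
  proof (intro ballI)
    fix X Y assume "X \<in> h" "Y \<in> q ` m i"
    then obtain y where "y \<in> m i" "Y = q y" by blast
    then have "br X Y = q (br X y)" using qeq[OF \<open>X \<in> h\<close>, of y] by simp
    moreover have "br X y \<in> m i" using m_inv[OF i \<open>X \<in> h\<close> \<open>y \<in> m i\<close>] .
    ultimately show "br X Y \<in> q ` m i" by blast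
  qed
  have injp: "inj_on p (m i)"
  proof -
    define K1 where "K1 = {v \<in> m i. p v = 0}"
    have K1s: "subspace K1" unfolding K1_def using mi pl
      by (auto simp: subspace_def linear_add linear_scale linear_0)
    have K1i: "h_inv br h K1" unfolding h_inv_def K1_def
      using peq m_inv[OF i] br_zero_right by auto
    have "K1 = {0} \<or> K1 = m i" by (rule m_irr[OF i K1s _ K1i]) (auto simp: K1_def)
    moreover have "K1 \<noteq> m i" using v1 \<open>p v1 \<noteq> 0\<close> unfolding K1_def by blast
    ultimately have K0: "K1 = {0}" by blast
    show ?thesis
    proof (rule inj_onI)
      fix a b assume ab: "a \<in> m i" "b \<in> m i" "p a = p b"
      have "a - b \<in> K1" using ab mi subspace_diff linear_diff[OF pl] unfolding K1_def by fastforce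
      then show "a = b" using K0 by simp
    qed
  qed
  have injq: "inj_on q (m i)"
  proof -
    define K1 where "K1 = {v \<in> m i. q v = 0}"
    have K1s: "subspace K1" unfolding K1_def using mi ql
      by (auto simp: subspace_def linear_add linear_scale linear_0)
    have K1i: "h_inv br h K1" unfolding h_inv_def K1_def
      using qeq m_inv[OF i] br_zero_right by auto
    have "K1 = {0} \<or> K1 = m i" by (rule m_irr[OF i K1s _ K1i]) (auto simp: K1_def)
    moreover have "K1 \<noteq> m i" using v0 \<open>q v0 \<noteq> 0\<close> unfolding K1_def by blast
    ultimately have K0: "K1 = {0}" by blast
    show ?thesis
    proof (rule inj_onI)
      fix a b assume ab: "a \<in> m i" "b \<in> m i" "q a = q b"
      have "a - b \<in> K1" using ab mi subspace_diff linear_diff[OF ql] unfolding K1_def by fastforce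
      then show "a = b" using K0 by simp
    qed
  qed
  have spm: "span (m i) = m i" using mi span_eq_iff by blast
  obtain g where g: "linear g" "\<forall>x\<in>m i. g (p x) = x"
    using linear_inj_on_left_inverse[of p "m i"] pl injp spm by auto
  define T where "T = q \<circ> g"
  have Tl: "linear T" unfolding T_def using g(1) ql by (rule linear_compose)
  have Tp: "T (p y) = q y" if "y \<in> m i" for y using g(2) that unfolding T_def by simp
  have bij: "bij_betw T U V"
  proof (rule bij_betw_imageI)
    show "inj_on T U"
    proof (rule inj_onI)
      fix a b assume "a \<in> U" "b \<in> U" "T a = T b"
      then obtain y y' where "y \<in> m i" "y' \<in> m i" "a = p y" "b = p y'" "q y = q y'"
        unfolding U_def using Tp by auto
      then show "a = b" using injq by (auto dest: inj_onD)
    qed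
    show "T ` U = V" unfolding U_def V_def using Tp by (auto simp: image_image)
  qed
  have intw: "\<forall>X\<in>h. \<forall>Y\<in>U. T (br X Y) = br X (T Y)"
  proof (intro ballI)
    fix X Y assume X: "X \<in> h" and Y: "Y \<in> U"
    then obtain y where y: "y \<in> m i" "Y = p y" unfolding U_def by blast
    have "T (br X Y) = T (p (br X y))" using peq X y by simp
    also have "\<dots> = q (br X y)" using Tp m_inv[OF i X y(1)] by blast
    also have "\<dots> = br X (q y)" using qeq X by blast
    also have "\<dots> = br X (T Y)" using Tp y by simp
    finally show "T (br X Y) = br X (T Y)" .
  qed
  have eqv: "h_equiv br h U V" unfolding h_equiv_def using Tl bij intw by blast
  have H1: "\<forall>U V. subspace U \<and> subspace V \<and> U \<noteq> {0} \<and> V \<noteq> {0} \<and>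
             U \<subseteq> ocomp S h \<and> V \<subseteq> ocomp UNIV S \<and> h_inv br h U \<and> h_inv br h V
             \<longrightarrow> \<not> h_equiv br h U V"
    using H S hS unfolding hypH_def by blast
  have "\<not> h_equiv br h U V"
    using H1 Us Vs Unz Vnz UO VO Ui Vi by blast
  then show False using eqv by blast
qed

end

context LS begin

abbreviation E where "E i \<equiv> onb (m i)"

lemma E_props: "i \<in> {1..s} \<Longrightarrow> finite (E i) \<and> E i \<subseteq> m i \<and> span (E i) = m i \<and>
         (\<forall>a\<in>E i. \<forall>b\<in>E i. inner a b = (if a = b then 1 else 0))"
  using onb_props[OF m_sub] by blast

lemma on_Sigma:
  assumes J: "J \<subseteq> {1..s}"
  shows "\<forall>p\<in>Sigma J E. \<forall>q\<in>Sigma J E. inner (snd p) (snd q) = (if p = q then 1 else 0)"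
proof (intro ballI)
  fix p q assume p: "p \<in> Sigma J E" and q: "q \<in> Sigma J E"
  obtain i c where pic: "p = (i, c)" "i \<in> J" "c \<in> E i" using p by blast
  obtain i' c' where qic: "q = (i', c')" "i' \<in> J" "c' \<in> E i'" using q by blast
  show "inner (snd p) (snd q) = (if p = q then 1 else 0)"
  proof (cases "i = i'")
    case True
    then show ?thesis using E_props[of i] pic qic J by auto
  next
    case False
    have "inner c c' = 0"
      using m_orth[of i i' c c'] False pic qic J E_props[of i] E_props[of i'] by blast
    then show ?thesis using pic qic False by simp
  qed
qed

lemma fin_Sigma: "J \<subseteq> {1..s} \<Longrightarrow> finite (Sigma J E)"
  using E_props by (intro finite_SigmaI) (auto intro: finite_subset[OF _ finite_atLeastAtMost])

lemma span_Sigma: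
  assumes J: "J \<subseteq> {1..s}"
  shows "span (snd ` Sigma J E) = span (\<Union>i\<in>J. m i)"
proof -
  have eq: "snd ` Sigma J E = (\<Union>i\<in>J. E i)" by force
  have "(\<Union>i\<in>J. E i) \<subseteq> (\<Union>i\<in>J. m i)" using E_props J by blast
  then have 1: "span (\<Union>i\<in>J. E i) \<subseteq> span (\<Union>i\<in>J. m i)" by (rule span_mono)
  have "(\<Union>i\<in>J. m i) \<subseteq> span (\<Union>i\<in>J. E i)"
  proof
    fix v assume "v \<in> (\<Union>i\<in>J. m i)"
    then obtain i where i: "i \<in> J" "v \<in> m i" by blast
    then have "v \<in> span (E i)" using E_props[of i] J by auto
    moreover have "span (E i) \<subseteq> span (\<Union>i\<in>J. E i)" using i by (intro span_mono) blast
    ultimately show "v \<in> span (\<Union>i\<in>J. E i)" by blast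
  qed
  then have 2: "span (\<Union>i\<in>J. m i) \<subseteq> span (\<Union>i\<in>J. E i)" by (simp add: span_minimal)
  show ?thesis using 1 2 eq by auto
qed

lemma fourier_Sigma:
  assumes J: "J \<subseteq> {1..s}" and v: "v \<in> span (\<Union>i\<in>J. m i)"
  shows "v = (\<Sum>p\<in>Sigma J E. inner v (snd p) *\<^sub>R snd p)"
  by (rule fourier[OF fin_Sigma[OF J] on_Sigma[OF J]]) (use v span_Sigma[OF J] in simp)

lemma Jchar:
  assumes S: "lie_subalg br S" and hS: "h \<subset> S"
  shows "Jidx s m h S = {i \<in> {1..s}. m i \<subseteq> S}"
    and "span (\<Union>i\<in>{i \<in> {1..s}. m i \<subseteq> S}. m i) = ocomp S h"
proof -
  let ?J = "{i \<in> {1..s}. m i \<subseteq> S}"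
  have Ssub: "subspace S" using S unfolding lie_subalg_def by blast
  have hS': "h \<subseteq> S" using hS by blast
  have Os: "subspace (ocomp S h)" by (rule subspace_ocomp[OF Ssub])
  have "(\<Union>i\<in>?J. m i) \<subseteq> ocomp S h"
    using m_perp_h unfolding ocomp_def by blast
  then have A: "span (\<Union>i\<in>?J. m i) \<subseteq> ocomp S h" using Os by (simp add: span_minimal)
  have B: "ocomp S h \<subseteq> span (\<Union>i\<in>?J. m i)"
  proof
    fix v assume v: "v \<in> ocomp S h"
    have vS: "v \<in> S" using v unfolding ocomp_def by blast
    have "v \<in> ocomp UNIV h" using v unfolding ocomp_def by blast
    then have "v \<in> span (\<Union>i\<in>{1..s}. m i)" using m_span by simp
    then have F: "v = (\<Sum>p\<in>Sigma {1..s} E. inner v (snd p) *\<^sub>R snd p)"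
      by (rule fourier_Sigma[OF order_refl])
    have "(\<Sum>p\<in>Sigma {1..s} E. inner v (snd p) *\<^sub>R snd p) = (\<Sum>p\<in>Sigma ?J E. inner v (snd p) *\<^sub>R snd p)"
    proof (rule sum.mono_neutral_right)
      show "finite (Sigma {1..s} E)" using fin_Sigma by simp
      show "Sigma ?J E \<subseteq> Sigma {1..s} E" by blast
      show "\<forall>p\<in>Sigma {1..s} E - Sigma ?J E. inner v (snd p) *\<^sub>R snd p = 0"
      proof
        fix p assume p: "p \<in> Sigma {1..s} E - Sigma ?J E"
        then obtain i c where pic: "p = (i, c)" "i \<in> {1..s}" "c \<in> E i" "\<not> m i \<subseteq> S" by blast
        have "\<forall>u\<in>m i. \<forall>z\<in>S. inner u z = 0" using dichotomy[OF S hS pic(2)] pic(4) by blast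
        moreover have "c \<in> m i" using E_props[OF pic(2)] pic(3) by blast
        ultimately have "inner v c = 0" using vS by (simp add: inner_commute)
        then show "inner v (snd p) *\<^sub>R snd p = 0" using pic by simp
      qed
    qed
    then have "v = (\<Sum>p\<in>Sigma ?J E. inner v (snd p) *\<^sub>R snd p)" using F by simp
    moreover have "(\<Sum>p\<in>Sigma ?J E. inner v (snd p) *\<^sub>R snd p) \<in> span (snd ` Sigma ?J E)"
      by (intro span_sum span_scale span_base) auto
    moreover have "?J \<subseteq> {1..s}" by blast
    ultimately show "v \<in> span (\<Union>i\<in>?J. m i)" using span_Sigma[of ?J] by simp
  qed
  show sp: "span (\<Union>i\<in>?J. m i) = ocomp S h" using A B by blast
  have uniq: "J = ?J" if J: "J \<subseteq> {1..s} \<and> span (\<Union>j\<in>J. m j) = ocomp S h" for J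
  proof
    show "J \<subseteq> ?J"
    proof
      fix i assume i: "i \<in> J"
      have "m i \<subseteq> span (\<Union>j\<in>J. m j)" using i by (auto intro: span_base)
      then have "m i \<subseteq> S" using J unfolding ocomp_def by blast
      then show "i \<in> ?J" using i J by blast
    qed
    show "?J \<subseteq> J"
    proof
      fix i assume i: "i \<in> ?J"
      show "i \<in> J"
      proof (rule ccontr)
        assume ni: "i \<notin> J"
        have is1: "i \<in> {1..s}" using i by blast
        obtain v where v: "v \<in> m i" "v \<noteq> 0" using m_nz[OF is1] m_sub[OF is1] subspace_0 by blast
        have "v \<in> ocomp S h" using v i m_perp_h[OF is1] unfolding ocomp_def by blast
        then have vsp: "v \<in> span (\<Union>j\<in>J. m j)" using J by simp
        have "orthogonal v v"
        proof (rule orthogonal_to_span[OF vsp])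
          fix y assume "y \<in> (\<Union>j\<in>J. m j)"
          then obtain j where "j \<in> J" "y \<in> m j" by blast
          then show "orthogonal v y" using m_orth[OF is1, of j v y] ni v J unfolding orthogonal_def by blast
        qed
        then show False using v by (simp add: orthogonal_def)
      qed
    qed
  qed
  show "Jidx s m h S = ?J" unfolding Jidx_def
    by (rule the_equality) (use sp uniq in auto)
qed

end


lemma bil_prod:
  fixes f g :: "'a::real_vector \<Rightarrow> real"
  assumes "linear f" "linear g"
  shows "bilinear (\<lambda>u v. c * f u * g v)"
  unfolding bilinear_def using assms
  by (auto intro!: linearI simp: linear_add linear_scale algebra_simps)

lemma bil_sum:
  fixes F :: "'t \<Rightarrow> 'a::real_vector \<Rightarrow> 'a \<Rightarrow> real"
  assumes "\<forall>t\<in>T. bilinear (F t)"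
  shows "bilinear (\<lambda>u v. \<Sum>t\<in>T. F t u v)"
  unfolding bilinear_def
proof (intro conjI allI)
  fix x show "linear (\<lambda>v. \<Sum>t\<in>T. F t x v)"
    by (rule linearI) (use assms in \<open>auto simp: bilinear_radd bilinear_rmul sum.distrib sum_distrib_left\<close>)
next
  fix y show "linear (\<lambda>u. \<Sum>t\<in>T. F t u y)"
    by (rule linearI) (use assms in \<open>auto simp: bilinear_ladd bilinear_lmul sum.distrib sum_distrib_left\<close>)
qed

context LS begin

lemma lin_r: "linear (\<lambda>u. inner (br a u) z)"
  by (rule linearI) (simp_all add: bilinear_radd[OF bil] bilinear_rmul[OF bil] inner_add_left)
lemma lin_l: "linear (\<lambda>u. inner (br u b) z)"
  by (rule linearI) (simp_all add: bilinear_ladd[OF bil] bilinear_lmul[OF bil] inner_add_left)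

lemma killing_bil: "bilinear (killing br)"
  unfolding bilinear_def killing_def
proof (intro conjI allI)
  fix x show "linear (\<lambda>v. \<Sum>b\<in>Basis. inner (br x (br v b)) b)"
    by (rule linearI) (simp_all add: bilinear_ladd[OF bil] bilinear_radd[OF bil] bilinear_lmul[OF bil]
        bilinear_rmul[OF bil] inner_add_left sum.distrib sum_distrib_left)
next
  fix y show "linear (\<lambda>u. \<Sum>b\<in>Basis. inner (br u (br y b)) b)"
    by (rule linearI) (simp_all add: bilinear_ladd[OF bil] bilinear_lmul[OF bil] inner_add_left sum.distrib sum_distrib_left)
qed

end


lemma sumSig:
  assumes "finite A" "\<forall>i\<in>A. finite (E i)"
  shows "sum H (Sigma A E) = (\<Sum>i\<in>A. \<Sum>a\<in>E i. H (i, a))"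
  using sum.Sigma[of A E "\<lambda>i a. H (i, a)"] assms by simp

lemma regroup:
  fixes F :: "'i \<Rightarrow> 'i \<Rightarrow> 'i \<Rightarrow> real" and G :: "'e \<Rightarrow> 'e \<Rightarrow> 'e \<Rightarrow> real"
  assumes "finite A" "finite B" "finite C" "\<forall>i\<in>A \<union> B \<union> C. finite (E i)"
  shows "(\<Sum>r\<in>Sigma A E. \<Sum>q\<in>Sigma B E. \<Sum>p\<in>Sigma C E. F (fst r) (fst q) (fst p) * G (snd r) (snd q) (snd p))
       = (\<Sum>i\<in>A. \<Sum>j\<in>B. \<Sum>k\<in>C. F i j k * (\<Sum>a\<in>E i. \<Sum>b\<in>E j. \<Sum>c\<in>E k. G a b c))"
proof -
  have L: "(\<Sum>r\<in>Sigma A E. \<Sum>q\<in>Sigma B E. \<Sum>p\<in>Sigma C E. F (fst r) (fst q) (fst p) * G (snd r) (snd q) (snd p))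
     = (\<Sum>i\<in>A. \<Sum>a\<in>E i. \<Sum>j\<in>B. \<Sum>b\<in>E j. \<Sum>k\<in>C. \<Sum>c\<in>E k. F i j k * G a b c)"
    using assms by (simp add: sumSig)
  have R: "(\<Sum>i\<in>A. \<Sum>j\<in>B. \<Sum>k\<in>C. F i j k * (\<Sum>a\<in>E i. \<Sum>b\<in>E j. \<Sum>c\<in>E k. G a b c))
     = (\<Sum>i\<in>A. \<Sum>j\<in>B. \<Sum>k\<in>C. \<Sum>a\<in>E i. \<Sum>b\<in>E j. \<Sum>c\<in>E k. F i j k * G a b c)"
    by (simp add: sum_distrib_left)
  have M: "(\<Sum>a\<in>E i. \<Sum>j\<in>B. \<Sum>b\<in>E j. \<Sum>k\<in>C. \<Sum>c\<in>E k. F i j k * G a b c)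
        = (\<Sum>j\<in>B. \<Sum>k\<in>C. \<Sum>a\<in>E i. \<Sum>b\<in>E j. \<Sum>c\<in>E k. F i j k * G a b c)" for i
  proof -
    have "(\<Sum>a\<in>E i. \<Sum>j\<in>B. \<Sum>b\<in>E j. \<Sum>k\<in>C. \<Sum>c\<in>E k. F i j k * G a b c)
        = (\<Sum>j\<in>B. \<Sum>a\<in>E i. \<Sum>b\<in>E j. \<Sum>k\<in>C. \<Sum>c\<in>E k. F i j k * G a b c)"
      by (rule sum.swap)
    also have "\<dots> = (\<Sum>j\<in>B. \<Sum>a\<in>E i. \<Sum>k\<in>C. \<Sum>b\<in>E j. \<Sum>c\<in>E k. F i j k * G a b c)"
      by (rule sum.cong[OF refl], rule sum.cong[OF refl], rule sum.swap)
    also have "\<dots> = (\<Sum>j\<in>B. \<Sum>k\<in>C. \<Sum>a\<in>E i. \<Sum>b\<in>E j. \<Sum>c\<in>E k. F i j k * G a b c)"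
      by (rule sum.cong[OF refl], rule sum.swap)
    finally show ?thesis .
  qed
  show ?thesis unfolding L R by (rule sum.cong[OF refl], rule M)
qed

context LS begin

definition W :: "nat set \<Rightarrow> 'a set" where "W J = span (\<Union>i\<in>J. m i)"
definition bk where "bk i j k = (\<Sum>a\<in>E i. \<Sum>b\<in>E j. \<Sum>c\<in>E k. (inner (br a b) c)\<^sup>2)"
definition kap where "kap i = (\<Sum>c\<in>E i. killing br c c)"

lemma W_sub: "subspace (W J)" unfolding W_def by (rule subspace_span)
lemma W_Sigma: "J \<subseteq> {1..s} \<Longrightarrow> W J = span (snd ` Sigma J E)" unfolding W_def by (rule span_Sigma[symmetric])
lemma snd_in_W: "J \<subseteq> {1..s} \<Longrightarrow> p \<in> Sigma J E \<Longrightarrow> snd p \<in> W J"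
proof -
  assume J: "J \<subseteq> {1..s}" and p: "p \<in> Sigma J E"
  have "snd p \<in> span (snd ` Sigma J E)" using p by (intro span_base imageI)
  then show ?thesis using W_Sigma[OF J] by simp
qed


end

context LS begin

lemma normW:
  assumes J: "J \<subseteq> {1..s}"
  shows "(norm (proj (W J) v))\<^sup>2 = (\<Sum>p\<in>Sigma J E. (inner v (snd p))\<^sup>2)"
proof -
  let ?P = "proj (W J) v"
  have PW: "?P \<in> span (snd ` Sigma J E)" using proj_in[OF W_sub, of J v] W_Sigma[OF J] by simp
  have "(norm ?P)\<^sup>2 = inner ?P ?P" by (simp add: dot_square_norm)
  also have "\<dots> = Gf (Sigma J E) snd (\<lambda>_. 1) ?P ?P"
    by (rule Gf_one_inner[OF fin_Sigma[OF J] on_Sigma[OF J] PW, symmetric])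
  also have "\<dots> = (\<Sum>p\<in>Sigma J E. (inner v (snd p))\<^sup>2)"
    unfolding Gf_def
    by (rule sum.cong) (use proj_inner[OF W_sub snd_in_W[OF J]] in \<open>auto simp: power2_eq_square\<close>)
  finally show ?thesis .
qed

lemma gonbW:
  assumes J: "J \<subseteq> {1..s}" and xpos: "\<forall>i\<in>J. x i > 0"
    and hg: "\<forall>Y\<in>W J. \<forall>Z\<in>W J. gf Y Z = Gf (Sigma J E) snd (\<lambda>p. x (fst p)) Y Z"
  shows "finite (gonb gf (W J)) \<and> gonb gf (W J) \<subseteq> W J \<and> span (gonb gf (W J)) = W J \<and>
     (\<forall>b\<in>gonb gf (W J). \<forall>b'\<in>gonb gf (W J). Gf (Sigma J E) snd (\<lambda>p. x (fst p)) b b' = (if b = b' then 1 else 0))"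
proof -
  have wpos: "\<forall>p\<in>Sigma J E. x (fst p) > 0" using xpos by auto
  obtain B where B: "finite B" "B \<subseteq> span (snd ` Sigma J E)" "span B = span (snd ` Sigma J E)"
     "\<forall>b\<in>B. \<forall>b'\<in>B. Gf (Sigma J E) snd (\<lambda>p. x (fst p)) b b' = (if b = b' then 1 else 0)"
    using Gf_onb_exists[OF fin_Sigma[OF J] on_Sigma[OF J] wpos] by blast
  have ex: "\<exists>B. finite B \<and> B \<subseteq> W J \<and> span B = W J \<and> (\<forall>e\<in>B. \<forall>f\<in>B. gf e f = (if e = f then 1 else 0))"
  proof (intro exI[of _ B] conjI)
    show "finite B" using B by blast
    show "B \<subseteq> W J" using B W_Sigma[OF J] by simp
    show "span B = W J" using B W_Sigma[OF J] by simp
    show "\<forall>e\<in>B. \<forall>f\<in>B. gf e f = (if e = f then 1 else 0)"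
    proof (intro ballI)
      fix e f assume "e \<in> B" "f \<in> B"
      then have "e \<in> W J" "f \<in> W J" using B W_Sigma[OF J] by auto
      then have "gf e f = Gf (Sigma J E) snd (\<lambda>p. x (fst p)) e f" using hg by blast
      then show "gf e f = (if e = f then 1 else 0)" using B \<open>e \<in> B\<close> \<open>f \<in> B\<close> by simp
    qed
  qed
  have G: "finite (gonb gf (W J)) \<and> gonb gf (W J) \<subseteq> W J \<and> span (gonb gf (W J)) = W J \<and>
      (\<forall>e\<in>gonb gf (W J). \<forall>f\<in>gonb gf (W J). gf e f = (if e = f then 1 else 0))"
    unfolding gonb_def by (rule someI_ex[OF ex])
  then show ?thesis using hg by (metis (no_types, lifting) subsetD)
qed

end

context LS begin

lemma scal_form:
  assumes J: "J \<subseteq> {1..s}" and xpos: "\<forall>i\<in>J. x i > 0"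
    and hg: "\<forall>Y\<in>W J. \<forall>Z\<in>W J. gf Y Z = Gf (Sigma J E) snd (\<lambda>p. x (fst p)) Y Z"
  shows "scal br gf (W J) = - 1/2 * (\<Sum>i\<in>J. kap i / x i)
     - 1/4 * (\<Sum>i\<in>J. \<Sum>j\<in>J. \<Sum>k\<in>J. x k / (x i * x j) * bk i j k)"
proof -
  let ?I = "Sigma J E"
  let ?w = "\<lambda>p. x (fst p)"
  let ?B = "gonb gf (W J)"
  have fin: "finite ?I" by (rule fin_Sigma[OF J])
  have on: "\<forall>p\<in>?I. \<forall>q\<in>?I. inner (snd p) (snd q) = (if p = q then 1 else 0)" by (rule on_Sigma[OF J])
  have wpos: "\<forall>p\<in>?I. ?w p > 0" using xpos by auto
  have GB: "finite ?B" "?B \<subseteq> W J" "span ?B = span (snd ` ?I)"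
     "\<forall>b\<in>?B. \<forall>b'\<in>?B. Gf ?I snd ?w b b' = (if b = b' then 1 else 0)"
    using gonbW[OF J xpos hg] W_Sigma[OF J] by auto
  have finJ: "finite J" using J finite_subset by blast
  have finEJ: "\<forall>i\<in>J. finite (E i)" using E_props J by blast
  have K: "(\<Sum>e\<in>?B. killing br e e) = (\<Sum>p\<in>?I. killing br (snd p) (snd p) / ?w p)"
    by (rule trace_lemma[OF fin on wpos GB(1) GB(3) GB(4) killing_bil])
  also have "\<dots> = (\<Sum>i\<in>J. kap i / x i)"
    by (simp add: sumSig[OF finJ finEJ] kap_def sum_divide_distrib)
  finally have K': "(\<Sum>e\<in>?B. killing br e e) = (\<Sum>i\<in>J. kap i / x i)" .
  have Q1: "gf (proj (W J) v) (proj (W J) v) = (\<Sum>p\<in>?I. ?w p * inner v (snd p) * inner v (snd p))" for v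
  proof -
    have P: "proj (W J) v \<in> W J" by (rule proj_in[OF W_sub])
    have "gf (proj (W J) v) (proj (W J) v) = Gf ?I snd ?w (proj (W J) v) (proj (W J) v)" using hg P by blast
    also have "\<dots> = (\<Sum>p\<in>?I. ?w p * inner v (snd p) * inner v (snd p))"
      unfolding Gf_def by (rule sum.cong) (use proj_inner[OF W_sub snd_in_W[OF J]] in auto)
    finally show ?thesis .
  qed
  have Q2: "(\<Sum>b\<in>?B. \<Sum>p\<in>?I. ?w p * inner (br a b) (snd p) * inner (br a b) (snd p))
     = (\<Sum>q\<in>?I. (\<Sum>p\<in>?I. ?w p * inner (br a (snd q)) (snd p) * inner (br a (snd q)) (snd p)) / ?w q)" for a
  proof -
    have bl: "bilinear (\<lambda>u v. \<Sum>p\<in>?I. ?w p * inner (br a u) (snd p) * inner (br a v) (snd p))"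
      by (rule bil_sum) (auto intro!: bil_prod lin_r)
    show ?thesis by (rule trace_lemma[OF fin on wpos GB(1) GB(3) GB(4) bl])
  qed
  have Q3: "(\<Sum>a\<in>?B. \<Sum>q\<in>?I. (\<Sum>p\<in>?I. ?w p * inner (br a (snd q)) (snd p) * inner (br a (snd q)) (snd p)) / ?w q)
     = (\<Sum>r\<in>?I. (\<Sum>q\<in>?I. \<Sum>p\<in>?I. (?w p / ?w q) * inner (br (snd r) (snd q)) (snd p) * inner (br (snd r) (snd q)) (snd p)) / ?w r)"
  proof -
    have bl: "bilinear (\<lambda>u v. \<Sum>q\<in>?I. \<Sum>p\<in>?I. (?w p / ?w q) * inner (br u (snd q)) (snd p) * inner (br v (snd q)) (snd p))"
      by (intro bil_sum ballI bil_prod lin_l)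
    have "(\<Sum>a\<in>?B. \<Sum>q\<in>?I. (\<Sum>p\<in>?I. ?w p * inner (br a (snd q)) (snd p) * inner (br a (snd q)) (snd p)) / ?w q)
        = (\<Sum>a\<in>?B. \<Sum>q\<in>?I. \<Sum>p\<in>?I. (?w p / ?w q) * inner (br a (snd q)) (snd p) * inner (br a (snd q)) (snd p))"
      by (simp add: sum_divide_distrib)
    also have "\<dots> = (\<Sum>r\<in>?I. (\<Sum>q\<in>?I. \<Sum>p\<in>?I. (?w p / ?w q) * inner (br (snd r) (snd q)) (snd p) * inner (br (snd r) (snd q)) (snd p)) / ?w r)"
      by (rule trace_lemma[OF fin on wpos GB(1) GB(3) GB(4) bl])
    finally show ?thesis .
  qed
  have Q: "(\<Sum>a\<in>?B. \<Sum>b\<in>?B. gf (proj (W J) (br a b)) (proj (W J) (br a b)))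
     = (\<Sum>i\<in>J. \<Sum>j\<in>J. \<Sum>k\<in>J. x k / (x i * x j) * bk i j k)"
  proof -
    have "(\<Sum>a\<in>?B. \<Sum>b\<in>?B. gf (proj (W J) (br a b)) (proj (W J) (br a b)))
       = (\<Sum>a\<in>?B. \<Sum>b\<in>?B. \<Sum>p\<in>?I. ?w p * inner (br a b) (snd p) * inner (br a b) (snd p))"
      by (simp add: Q1)
    also have "\<dots> = (\<Sum>a\<in>?B. \<Sum>q\<in>?I. (\<Sum>p\<in>?I. ?w p * inner (br a (snd q)) (snd p) * inner (br a (snd q)) (snd p)) / ?w q)"
      by (rule sum.cong[OF refl], rule Q2)
    also have "\<dots> = (\<Sum>r\<in>?I. (\<Sum>q\<in>?I. \<Sum>p\<in>?I. (?w p / ?w q) * inner (br (snd r) (snd q)) (snd p) * inner (br (snd r) (snd q)) (snd p)) / ?w r)"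
      by (rule Q3)
    also have "\<dots> = (\<Sum>r\<in>?I. \<Sum>q\<in>?I. \<Sum>p\<in>?I. (\<lambda>i j k. x k / (x i * x j)) (fst r) (fst q) (fst p) *
                       (\<lambda>a b c. (inner (br a b) c)\<^sup>2) (snd r) (snd q) (snd p))"
      by (simp add: sum_divide_distrib power2_eq_square field_simps)
    also have "\<dots> = (\<Sum>i\<in>J. \<Sum>j\<in>J. \<Sum>k\<in>J. x k / (x i * x j) * bk i j k)"
      unfolding bk_def by (rule regroup) (use finJ finEJ in auto)
    finally show ?thesis .
  qed
  show ?thesis unfolding scal_def using K' Q by simp
qed

lemma cross_form:
  assumes J: "J \<subseteq> {1..s}" and C: "C \<subseteq> {1..s}" and xpos: "\<forall>i\<in>J. x i > 0"
    and hg: "\<forall>Y\<in>W J. \<forall>Z\<in>W J. gf Y Z = Gf (Sigma J E) snd (\<lambda>p. x (fst p)) Y Z"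
  shows "(\<Sum>a\<in>gonb gf (W J). \<Sum>b\<in>onb (W C). (norm (proj (W C) (br a b)))\<^sup>2)
     = (\<Sum>i\<in>J. \<Sum>j\<in>C. \<Sum>k\<in>C. bk i j k / x i)"
proof -
  let ?I = "Sigma J E"
  let ?IC = "Sigma C E"
  let ?w = "\<lambda>p. x (fst p)"
  let ?B = "gonb gf (W J)"
  let ?D = "onb (W C)"
  have fin: "finite ?I" by (rule fin_Sigma[OF J])
  have on: "\<forall>p\<in>?I. \<forall>q\<in>?I. inner (snd p) (snd q) = (if p = q then 1 else 0)" by (rule on_Sigma[OF J])
  have wpos: "\<forall>p\<in>?I. ?w p > 0" using xpos by auto
  have finC: "finite ?IC" by (rule fin_Sigma[OF C])
  have onC: "\<forall>p\<in>?IC. \<forall>q\<in>?IC. inner (snd p) (snd q) = (if p = q then 1 else 0)" by (rule on_Sigma[OF C])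
  have onepos: "\<forall>p\<in>?IC. (\<lambda>_. 1::real) p > 0" by simp
  have GB: "finite ?B" "?B \<subseteq> W J" "span ?B = span (snd ` ?I)"
     "\<forall>b\<in>?B. \<forall>b'\<in>?B. Gf ?I snd ?w b b' = (if b = b' then 1 else 0)"
    using gonbW[OF J xpos hg] W_Sigma[OF J] by auto
  have D: "finite ?D" "?D \<subseteq> W C" "span ?D = W C" "\<forall>a\<in>?D. \<forall>b\<in>?D. inner a b = (if a = b then 1 else 0)"
    using onb_props[OF W_sub] by blast+
  have spD: "span ?D = span (snd ` ?IC)" using D W_Sigma[OF C] by simp
  have GD: "\<forall>b\<in>?D. \<forall>b'\<in>?D. Gf ?IC snd (\<lambda>_. 1) b b' = (if b = b' then 1 else 0)"
  proof (intro ballI)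
    fix b b' assume b: "b \<in> ?D" and b': "b' \<in> ?D"
    have "b' \<in> span (snd ` ?IC)" using D b' W_Sigma[OF C] by auto
    then have "Gf ?IC snd (\<lambda>_. 1) b b' = inner b b'" by (rule Gf_one_inner[OF finC onC])
    then show "Gf ?IC snd (\<lambda>_. 1) b b' = (if b = b' then 1 else 0)" using D b b' by simp
  qed
  have finJ: "finite J" using J finite_subset by blast
  have finCC: "finite C" using C finite_subset by blast
  have finEJ: "\<forall>i\<in>J \<union> C \<union> C. finite (E i)" using E_props J C by blast
  have Q2: "(\<Sum>b\<in>?D. \<Sum>p\<in>?IC. 1 * inner (br a b) (snd p) * inner (br a b) (snd p))
     = (\<Sum>q\<in>?IC. (\<Sum>p\<in>?IC. 1 * inner (br a (snd q)) (snd p) * inner (br a (snd q)) (snd p)) / 1)" for a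
  proof -
    have bl: "bilinear (\<lambda>u v. \<Sum>p\<in>?IC. 1 * inner (br a u) (snd p) * inner (br a v) (snd p))"
      by (intro bil_sum ballI bil_prod lin_r)
    show ?thesis by (rule trace_lemma[OF finC onC onepos D(1) spD GD bl])
  qed
  have Q3: "(\<Sum>a\<in>?B. \<Sum>q\<in>?IC. \<Sum>p\<in>?IC. 1 * inner (br a (snd q)) (snd p) * inner (br a (snd q)) (snd p))
     = (\<Sum>r\<in>?I. (\<Sum>q\<in>?IC. \<Sum>p\<in>?IC. 1 * inner (br (snd r) (snd q)) (snd p) * inner (br (snd r) (snd q)) (snd p)) / ?w r)"
  proof -
    have bl: "bilinear (\<lambda>u v. \<Sum>q\<in>?IC. \<Sum>p\<in>?IC. 1 * inner (br u (snd q)) (snd p) * inner (br v (snd q)) (snd p))"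
      by (intro bil_sum ballI bil_prod lin_l)
    show ?thesis by (rule trace_lemma[OF fin on wpos GB(1) GB(3) GB(4) bl])
  qed
  have "(\<Sum>a\<in>?B. \<Sum>b\<in>?D. (norm (proj (W C) (br a b)))\<^sup>2)
      = (\<Sum>a\<in>?B. \<Sum>b\<in>?D. \<Sum>p\<in>?IC. 1 * inner (br a b) (snd p) * inner (br a b) (snd p))"
    by (simp add: normW[OF C] power2_eq_square[symmetric])
  also have "\<dots> = (\<Sum>a\<in>?B. \<Sum>q\<in>?IC. (\<Sum>p\<in>?IC. 1 * inner (br a (snd q)) (snd p) * inner (br a (snd q)) (snd p)) / 1)"
    by (rule sum.cong[OF refl], rule Q2)
  also have "\<dots> = (\<Sum>a\<in>?B. \<Sum>q\<in>?IC. \<Sum>p\<in>?IC. 1 * inner (br a (snd q)) (snd p) * inner (br a (snd q)) (snd p))"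
    by simp
  also have "\<dots> = (\<Sum>r\<in>?I. (\<Sum>q\<in>?IC. \<Sum>p\<in>?IC. 1 * inner (br (snd r) (snd q)) (snd p) * inner (br (snd r) (snd q)) (snd p)) / ?w r)"
    by (rule Q3)
  also have "\<dots> = (\<Sum>r\<in>?I. \<Sum>q\<in>?IC. \<Sum>p\<in>?IC. (\<lambda>i j k. 1 / x i) (fst r) (fst q) (fst p) *
                       (\<lambda>a b c. (inner (br a b) c)\<^sup>2) (snd r) (snd q) (snd p))"
    by (simp add: sum_divide_distrib power2_eq_square field_simps)
  also have "\<dots> = (\<Sum>i\<in>J. \<Sum>j\<in>C. \<Sum>k\<in>C. 1 / x i * bk i j k)"
    unfolding bk_def by (rule regroup) (use finJ finCC finEJ in auto)
  also have "\<dots> = (\<Sum>i\<in>J. \<Sum>j\<in>C. \<Sum>k\<in>C. bk i j k / x i)" by simp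
  finally show ?thesis .
qed

end

context LS begin

lemma bk_swap12: "bk i j k = bk j i k"
proof -
  have sq: "(inner (br a b) c)\<^sup>2 = (inner (br b a) c)\<^sup>2" for a b c
    using antisym[of a b] by simp
  have "bk i j k = (\<Sum>a\<in>E i. \<Sum>b\<in>E j. \<Sum>c\<in>E k. (inner (br b a) c)\<^sup>2)"
    unfolding bk_def by (simp only: sq)
  also have "\<dots> = bk j i k" unfolding bk_def by (rule sum.swap)
  finally show ?thesis .
qed

lemma bk_swap23: "bk i j k = bk i k j"
proof -
  have sq: "(inner (br a b) c)\<^sup>2 = (inner (br a c) b)\<^sup>2" for a b c
    using inv[of a b c] by (simp add: inner_commute)
  have "bk i j k = (\<Sum>a\<in>E i. \<Sum>b\<in>E j. \<Sum>c\<in>E k. (inner (br a c) b)\<^sup>2)"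
    unfolding bk_def by (simp only: sq)
  also have "\<dots> = bk i k j" unfolding bk_def by (rule sum.cong[OF refl], rule sum.swap)
  finally show ?thesis .
qed

lemma bk_nonneg: "bk i j k \<ge> 0" unfolding bk_def by (intro sum_nonneg) simp

lemma brkt_bk: "k \<in> {1..s} \<Longrightarrow> brkt br m k i j = bk i j k"
  unfolding brkt_def bk_def by (simp add: norm_proj_sq[OF m_sub])

lemma bk_zero:
  assumes S: "lie_subalg br S" and i: "i \<in> {1..s}" "m i \<subseteq> S" and j: "j \<in> {1..s}" "m j \<subseteq> S"
    and k: "k \<in> {1..s}" "\<forall>v\<in>m k. \<forall>z\<in>S. inner v z = 0"
  shows "bk i j k = 0"
proof -
  have "(inner (br a b) c)\<^sup>2 = 0" if "a \<in> E i" "b \<in> E j" "c \<in> E k" for a b c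
  proof -
    have "a \<in> S" "b \<in> S" "c \<in> m k" using that E_props i j k by blast+
    then have "br a b \<in> S" using S unfolding lie_subalg_def by blast
    then show ?thesis using k \<open>c \<in> m k\<close> by (simp add: inner_commute)
  qed
  then show ?thesis unfolding bk_def by simp
qed

lemma perpW:
  assumes J: "J \<subseteq> {1..s}" and i: "i \<in> {1..s}" "i \<notin> J" and Y: "Y \<in> W J" and c: "c \<in> m i"
  shows "inner Y c = 0"
proof -
  have "orthogonal c Y"
  proof (rule orthogonal_to_span[of Y])
    show "Y \<in> span (\<Union>i\<in>J. m i)" using Y unfolding W_def .
    fix y assume "y \<in> (\<Union>i\<in>J. m i)"
    then obtain j where "j \<in> J" "y \<in> m j" by blast
    then show "orthogonal c y" using m_orth[OF i(1), of j c y] i J c unfolding orthogonal_def by blast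
  qed
  then show ?thesis by (simp add: orthogonal_def inner_commute)
qed

lemma restrictW:
  assumes J: "J \<subseteq> {1..s}" and J': "J' \<subseteq> J" and v: "v \<in> W J"
    and perp: "\<forall>i\<in>J - J'. \<forall>c\<in>m i. inner v c = 0"
  shows "v \<in> W J'"
proof -
  have J's: "J' \<subseteq> {1..s}" using J J' by blast
  have F: "v = (\<Sum>p\<in>Sigma J E. inner v (snd p) *\<^sub>R snd p)"
    by (rule fourier_Sigma[OF J]) (use v in \<open>simp add: W_def\<close>)
  have "(\<Sum>p\<in>Sigma J E. inner v (snd p) *\<^sub>R snd p) = (\<Sum>p\<in>Sigma J' E. inner v (snd p) *\<^sub>R snd p)"
  proof (rule sum.mono_neutral_right)
    show "finite (Sigma J E)" by (rule fin_Sigma[OF J])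
    show "Sigma J' E \<subseteq> Sigma J E" using J' by blast
    show "\<forall>p\<in>Sigma J E - Sigma J' E. inner v (snd p) *\<^sub>R snd p = 0"
    proof
      fix p assume p: "p \<in> Sigma J E - Sigma J' E"
      then obtain i c where pic: "p = (i, c)" "i \<in> J - J'" "c \<in> E i" by blast
      have "c \<in> m i" using E_props pic J by blast
      then have "inner v c = 0" using perp pic by blast
      then show "inner v (snd p) *\<^sub>R snd p = 0" using pic by simp
    qed
  qed
  then have "v = (\<Sum>p\<in>Sigma J' E. inner v (snd p) *\<^sub>R snd p)" using F by simp
  moreover have "(\<Sum>p\<in>Sigma J' E. inner v (snd p) *\<^sub>R snd p) \<in> span (snd ` Sigma J' E)"
    by (intro span_sum span_scale span_base) auto
  ultimately show ?thesis using W_Sigma[OF J's] by simp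
qed

lemma W_mono: "J' \<subseteq> J \<Longrightarrow> W J' \<subseteq> W J"
  unfolding W_def by (rule span_mono) blast

lemma W_sub_ocomp:
  assumes V: "subspace V" and J: "\<forall>i\<in>J. m i \<subseteq> V"
  shows "W J \<subseteq> V"
  unfolding W_def using J V by (simp add: span_minimal UN_least)

lemma proj_inner_expand:
  assumes i: "i \<in> {1..s}"
  shows "inner (proj (m i) Y) (proj (m i) Z) = (\<Sum>c\<in>E i. inner Y c * inner Z c)"
proof -
  have Ep: "finite (E i)" "span (E i) = m i" "\<forall>a\<in>E i. \<forall>b\<in>E i. inner a b = (if a = b then 1 else 0)" "E i \<subseteq> m i"
    using E_props[OF i] by blast+
  have PZ: "proj (m i) Z \<in> span (id ` E i)" using proj_in[OF m_sub[OF i]] Ep by simp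
  have "proj (m i) Z = (\<Sum>c\<in>E i. inner (proj (m i) Z) c *\<^sub>R c)"
    using fourier[of "E i" id, OF Ep(1) _ PZ] Ep(3) by simp
  also have "\<dots> = (\<Sum>c\<in>E i. inner Z c *\<^sub>R c)"
    by (rule sum.cong) (use proj_inner[OF m_sub[OF i]] Ep(4) in auto)
  finally have "inner (proj (m i) Y) (proj (m i) Z) = inner (proj (m i) Y) (\<Sum>c\<in>E i. inner Z c *\<^sub>R c)" by simp
  also have "\<dots> = (\<Sum>c\<in>E i. inner Z c * inner (proj (m i) Y) c)" by (simp add: inner_sum_right)
  also have "\<dots> = (\<Sum>c\<in>E i. inner Y c * inner Z c)"
    by (rule sum.cong) (use proj_inner[OF m_sub[OF i]] Ep(4) in auto)
  finally show ?thesis .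
qed

end


lemma rev3: "(\<Sum>i\<in>A. \<Sum>j\<in>B. \<Sum>k\<in>C. f i j k) = (\<Sum>k\<in>C. \<Sum>j\<in>B. \<Sum>i\<in>A. (f i j k :: real))"
proof -
  have "(\<Sum>i\<in>A. \<Sum>j\<in>B. \<Sum>k\<in>C. f i j k) = (\<Sum>i\<in>A. \<Sum>k\<in>C. \<Sum>j\<in>B. f i j k)"
    by (rule sum.cong[OF refl], rule sum.swap)
  also have "\<dots> = (\<Sum>k\<in>C. \<Sum>i\<in>A. \<Sum>j\<in>B. f i j k)" by (rule sum.swap)
  also have "\<dots> = (\<Sum>k\<in>C. \<Sum>j\<in>B. \<Sum>i\<in>A. f i j k)" by (rule sum.cong[OF refl], rule sum.swap)
  finally show ?thesis .
qed

lemma rot3: "(\<Sum>i\<in>A. \<Sum>j\<in>B. \<Sum>k\<in>C. f i j k) = (\<Sum>k\<in>C. \<Sum>i\<in>A. \<Sum>j\<in>B. (f i j k :: real))"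
proof -
  have "(\<Sum>i\<in>A. \<Sum>j\<in>B. \<Sum>k\<in>C. f i j k) = (\<Sum>i\<in>A. \<Sum>k\<in>C. \<Sum>j\<in>B. f i j k)"
    by (rule sum.cong[OF refl], rule sum.swap)
  also have "\<dots> = (\<Sum>k\<in>C. \<Sum>i\<in>A. \<Sum>j\<in>B. f i j k)" by (rule sum.swap)
  finally show ?thesis .
qed

lemma split3:
  assumes "finite N" "finite L" "N \<inter> L = {}"
  shows "(\<Sum>i\<in>N \<union> L. \<Sum>j\<in>N \<union> L. \<Sum>k\<in>N \<union> L. f i j k) =
    (\<Sum>i\<in>N. \<Sum>j\<in>N. \<Sum>k\<in>N. f i j k) + (\<Sum>i\<in>N. \<Sum>j\<in>N. \<Sum>k\<in>L. f i j k) +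
    (\<Sum>i\<in>N. \<Sum>j\<in>L. \<Sum>k\<in>N. f i j k) + (\<Sum>i\<in>N. \<Sum>j\<in>L. \<Sum>k\<in>L. f i j k) +
    (\<Sum>i\<in>L. \<Sum>j\<in>N. \<Sum>k\<in>N. f i j k) + (\<Sum>i\<in>L. \<Sum>j\<in>N. \<Sum>k\<in>L. f i j k) +
    (\<Sum>i\<in>L. \<Sum>j\<in>L. \<Sum>k\<in>N. f i j k) + (\<Sum>i\<in>L. \<Sum>j\<in>L. \<Sum>k\<in>L. (f i j k :: real))"
  using assms by (simp add: sum.union_disjoint sum.distrib)

lemma lin_aux:
  fixes A B D SNL SN SL c1 c2 c3 c4 :: real
  assumes "0 \<le> A" "D \<le> B" "SNL = SN + SL - 1/4*(A+2*B)" "c1 = c2 + c3" "0 \<le> c3" "c4 = D + c2"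
  shows "SNL - 1/2*c1 \<le> SN - 1/2*c4 + SL"
  using assms by (simp add: field_simps)

definition SCf :: "(nat \<Rightarrow> real) \<Rightarrow> (nat \<Rightarrow> real) \<Rightarrow> (nat \<Rightarrow> nat \<Rightarrow> nat \<Rightarrow> real) \<Rightarrow> nat set \<Rightarrow> real" where
  "SCf kp x b J = - 1/2 * (\<Sum>i\<in>J. kp i / x i) - 1/4 * (\<Sum>i\<in>J. \<Sum>j\<in>J. \<Sum>k\<in>J. x k / (x i * x j) * b i j k)"

lemma algebra_main:
  fixes b :: "nat \<Rightarrow> nat \<Rightarrow> nat \<Rightarrow> real" and x kp :: "nat \<Rightarrow> real"
  assumes fin: "finite N" "finite L" "finite C"
    and disj: "N \<inter> L = {}" "L \<inter> C = {}" "N \<inter> C = {}"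
    and s12: "\<And>i j k. b i j k = b j i k" and s23: "\<And>i j k. b i j k = b i k j"
    and nn: "\<And>i j k. b i j k \<ge> 0"
    and xp: "\<forall>i\<in>N \<union> L. x i > 0"
    and z1: "\<forall>i\<in>N. \<forall>j\<in>N. \<forall>k\<in>L. b i j k = 0"
    and z2: "\<forall>i\<in>N. \<forall>j\<in>L. \<forall>k\<in>C. b i j k = 0"
  shows "SCf kp x b (N \<union> L) - 1/2 * (\<Sum>i\<in>N \<union> L. \<Sum>j\<in>C. \<Sum>k\<in>C. b i j k / x i)
     = SCf kp x b N + SCf kp x b L - 1/2 * (\<Sum>i\<in>N \<union> L. \<Sum>j\<in>C. \<Sum>k\<in>C. b i j k / x i)
       - 1/4 * (\<Sum>i\<in>L. \<Sum>j\<in>L. \<Sum>k\<in>N. b i j k * (x k / (x i * x j) + 2 * x i / (x j * x k)))"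
    and "SCf kp x b (N \<union> L) - 1/2 * (\<Sum>i\<in>N \<union> L. \<Sum>j\<in>C. \<Sum>k\<in>C. b i j k / x i)
     \<le> (SCf kp x b N - 1/2 * (\<Sum>i\<in>N. \<Sum>j\<in>L \<union> C. \<Sum>k\<in>L \<union> C. b i j k / x i)) + SCf kp x b L"
proof -
  define f where "f i j k = x k / (x i * x j) * b i j k" for i j k
  define A where "A = (\<Sum>i\<in>L. \<Sum>j\<in>L. \<Sum>k\<in>N. x k / (x i * x j) * b i j k)"
  define B where "B = (\<Sum>i\<in>L. \<Sum>j\<in>L. \<Sum>k\<in>N. b i j k * (x i / (x j * x k)))"
  have T1: "(\<Sum>i\<in>N. \<Sum>j\<in>N. \<Sum>k\<in>L. f i j k) = 0" using z1 by (simp add: f_def)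
  have T2: "(\<Sum>i\<in>N. \<Sum>j\<in>L. \<Sum>k\<in>N. f i j k) = 0"
  proof -
    have "b i j k = 0" if "i \<in> N" "j \<in> L" "k \<in> N" for i j k
      using z1 that s23[of i j k] by simp
    then show ?thesis by (simp add: f_def)
  qed
  have T3: "(\<Sum>i\<in>L. \<Sum>j\<in>N. \<Sum>k\<in>N. f i j k) = 0"
  proof -
    have "b i j k = 0" if "i \<in> L" "j \<in> N" "k \<in> N" for i j k
      using z1 that s12[of i j k] s23[of j i k] by simp
    then show ?thesis by (simp add: f_def)
  qed
  have T4: "(\<Sum>i\<in>N. \<Sum>j\<in>L. \<Sum>k\<in>L. f i j k) = B"
  proof -
    have "(\<Sum>i\<in>N. \<Sum>j\<in>L. \<Sum>k\<in>L. f i j k) = (\<Sum>k\<in>L. \<Sum>j\<in>L. \<Sum>i\<in>N. f i j k)" by (rule rev3)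
    also have "\<dots> = B" unfolding B_def f_def
    proof (intro sum.cong refl)
      fix k j i
      have "b i j k = b k j i" using s12[of i j k] s23[of j i k] s12[of j k i] by simp
      then show "x k / (x i * x j) * b i j k = b k j i * (x k / (x j * x i))" by (simp add: mult.commute)
    qed
    finally show ?thesis .
  qed
  have T5: "(\<Sum>i\<in>L. \<Sum>j\<in>N. \<Sum>k\<in>L. f i j k) = B"
  proof -
    have "(\<Sum>i\<in>L. \<Sum>j\<in>N. \<Sum>k\<in>L. f i j k) = (\<Sum>k\<in>L. \<Sum>i\<in>L. \<Sum>j\<in>N. f i j k)" by (rule rot3)
    also have "\<dots> = B" unfolding B_def f_def
    proof (intro sum.cong refl)
      fix k i j
      have "b i j k = b k i j" using s23[of i j k] s12[of i k j] by simp
      then show "x k / (x i * x j) * b i j k = b k i j * (x k / (x i * x j))" by (simp add: mult.commute)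
    qed
    finally show ?thesis .
  qed
  have T6: "(\<Sum>i\<in>L. \<Sum>j\<in>L. \<Sum>k\<in>N. f i j k) = A" unfolding A_def f_def ..
  have S3: "(\<Sum>i\<in>N \<union> L. \<Sum>j\<in>N \<union> L. \<Sum>k\<in>N \<union> L. f i j k) =
     (\<Sum>i\<in>N. \<Sum>j\<in>N. \<Sum>k\<in>N. f i j k) + (\<Sum>i\<in>L. \<Sum>j\<in>L. \<Sum>k\<in>L. f i j k) + A + 2 * B"
    using split3[OF fin(1,2) disj(1), of f] T1 T2 T3 T4 T5 T6 by simp
  have K: "(\<Sum>i\<in>N \<union> L. kp i / x i) = (\<Sum>i\<in>N. kp i / x i) + (\<Sum>i\<in>L. kp i / x i)"
    using fin disj by (simp add: sum.union_disjoint)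
  have TGT: "(\<Sum>i\<in>L. \<Sum>j\<in>L. \<Sum>k\<in>N. b i j k * (x k / (x i * x j) + 2 * x i / (x j * x k))) = A + 2 * B"
    unfolding A_def B_def by (simp add: sum.distrib sum_distrib_left algebra_simps)
  have SCeq: "SCf kp x b (N \<union> L) = SCf kp x b N + SCf kp x b L - 1/4 * (A + 2 * B)"
    unfolding SCf_def using S3 K unfolding f_def by (simp add: algebra_simps)
  show "SCf kp x b (N \<union> L) - 1/2 * (\<Sum>i\<in>N \<union> L. \<Sum>j\<in>C. \<Sum>k\<in>C. b i j k / x i)
     = SCf kp x b N + SCf kp x b L - 1/2 * (\<Sum>i\<in>N \<union> L. \<Sum>j\<in>C. \<Sum>k\<in>C. b i j k / x i)
       - 1/4 * (\<Sum>i\<in>L. \<Sum>j\<in>L. \<Sum>k\<in>N. b i j k * (x k / (x i * x j) + 2 * x i / (x j * x k)))"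
    using SCeq TGT by simp
  define D where "D = (\<Sum>i\<in>N. \<Sum>j\<in>L. \<Sum>k\<in>L. b i j k / x i)"
  have CC: "(\<Sum>i\<in>N \<union> L. \<Sum>j\<in>C. \<Sum>k\<in>C. b i j k / x i)
      = (\<Sum>i\<in>N. \<Sum>j\<in>C. \<Sum>k\<in>C. b i j k / x i) + (\<Sum>i\<in>L. \<Sum>j\<in>C. \<Sum>k\<in>C. b i j k / x i)"
    using fin disj by (simp add: sum.union_disjoint)
  have LCC: "(\<Sum>i\<in>L. \<Sum>j\<in>C. \<Sum>k\<in>C. b i j k / x i) \<ge> 0"
    using xp nn by (intro sum_nonneg divide_nonneg_pos) auto
  have NLC: "(\<Sum>i\<in>N. \<Sum>j\<in>L \<union> C. \<Sum>k\<in>L \<union> C. b i j k / x i)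
      = D + (\<Sum>i\<in>N. \<Sum>j\<in>C. \<Sum>k\<in>C. b i j k / x i)"
  proof -
    have z3: "b i j k = 0" if "i \<in> N" "j \<in> C" "k \<in> L" for i j k
      using z2 that s23[of i j k] by simp
    have "(\<Sum>i\<in>N. \<Sum>j\<in>L \<union> C. \<Sum>k\<in>L \<union> C. b i j k / x i) =
       (\<Sum>i\<in>N. (\<Sum>j\<in>L. \<Sum>k\<in>L. b i j k / x i) + (\<Sum>j\<in>L. \<Sum>k\<in>C. b i j k / x i) +
                 (\<Sum>j\<in>C. \<Sum>k\<in>L. b i j k / x i) + (\<Sum>j\<in>C. \<Sum>k\<in>C. b i j k / x i))"
      using fin disj by (simp add: sum.union_disjoint sum.distrib)
    also have "\<dots> = (\<Sum>i\<in>N. (\<Sum>j\<in>L. \<Sum>k\<in>L. b i j k / x i) + (\<Sum>j\<in>C. \<Sum>k\<in>C. b i j k / x i))"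
      using z2 z3 by (intro sum.cong refl) simp
    also have "\<dots> = D + (\<Sum>i\<in>N. \<Sum>j\<in>C. \<Sum>k\<in>C. b i j k / x i)"
      unfolding D_def by (simp add: sum.distrib)
    finally show ?thesis .
  qed
  have A0: "A \<ge> 0" unfolding A_def
  proof (intro sum_nonneg)
    fix i j k assume "i \<in> L" "j \<in> L" "k \<in> N"
    then have "x i > 0" "x j > 0" "x k > 0" using xp by auto
    then show "0 \<le> x k / (x i * x j) * b i j k" using nn[of i j k] by simp
  qed
  have DB: "D \<le> B"
  proof -
    have D': "D = (\<Sum>i\<in>L. \<Sum>j\<in>L. \<Sum>k\<in>N. b i j k / x k)"
    proof -
      have "D = (\<Sum>k\<in>L. \<Sum>j\<in>L. \<Sum>i\<in>N. b i j k / x i)" unfolding D_def by (rule rev3)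
      also have "\<dots> = (\<Sum>i\<in>L. \<Sum>j\<in>L. \<Sum>k\<in>N. b i j k / x k)"
      proof (intro sum.cong refl)
        fix k j i
        have "b i j k = b k j i" using s12[of i j k] s23[of j i k] s12[of j k i] by simp
        then show "b i j k / x i = b k j i / x i" by simp
      qed
      finally show ?thesis .
    qed
    have B': "B = (\<Sum>i\<in>L. \<Sum>j\<in>L. \<Sum>k\<in>N. b i j k * (x j / (x i * x k)))"
    proof -
      have "B = (\<Sum>j\<in>L. \<Sum>i\<in>L. \<Sum>k\<in>N. b i j k * (x i / (x j * x k)))" unfolding B_def by (rule sum.swap)
      also have "\<dots> = (\<Sum>i\<in>L. \<Sum>j\<in>L. \<Sum>k\<in>N. b i j k * (x j / (x i * x k)))"
        by (intro sum.cong refl) (simp add: s12)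
      finally show ?thesis .
    qed
    have "2 * D \<le> 2 * B"
    proof -
      have "2 * D = (\<Sum>i\<in>L. \<Sum>j\<in>L. \<Sum>k\<in>N. 2 * (b i j k / x k))" unfolding D' by (simp add: sum_distrib_left)
      also have "\<dots> \<le> (\<Sum>i\<in>L. \<Sum>j\<in>L. \<Sum>k\<in>N. b i j k * (x i / (x j * x k)) + b i j k * (x j / (x i * x k)))"
      proof (intro sum_mono)
        fix i j k assume i: "i \<in> L" and j: "j \<in> L" and k: "k \<in> N"
        have xi: "x i > 0" "x j > 0" "x k > 0" using xp i j k by auto
        have am: "x i / x j + x j / x i \<ge> 2"
        proof -
          have "(x i - x j)\<^sup>2 \<ge> 0" by simp
          then have "x i * x i + x j * x j \<ge> 2 * (x i * x j)" by (simp add: power2_eq_square algebra_simps)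
          then show ?thesis using xi by (simp add: field_simps)
        qed
        have "b i j k * (x i / (x j * x k)) + b i j k * (x j / (x i * x k)) = (b i j k / x k) * (x i / x j + x j / x i)"
          using xi by (simp add: field_simps)
        also have "\<dots> \<ge> (b i j k / x k) * 2"
          using am nn[of i j k] xi by (intro mult_left_mono) auto
        finally show "2 * (b i j k / x k) \<le> b i j k * (x i / (x j * x k)) + b i j k * (x j / (x i * x k))" by (simp add: mult.commute)
      qed
      also have "\<dots> = B + (\<Sum>i\<in>L. \<Sum>j\<in>L. \<Sum>k\<in>N. b i j k * (x j / (x i * x k)))"
        unfolding B_def by (simp only: sum.distrib)
      also have "\<dots> = B + B" using B' by simp
      finally show ?thesis by simp
    qed
    then show ?thesis by simp
  qed
  show "SCf kp x b (N \<union> L) - 1/2 * (\<Sum>i\<in>N \<union> L. \<Sum>j\<in>C. \<Sum>k\<in>C. b i j k / x i)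
     \<le> (SCf kp x b N - 1/2 * (\<Sum>i\<in>N. \<Sum>j\<in>L \<union> C. \<Sum>k\<in>L \<union> C. b i j k / x i)) + SCf kp x b L"
  proof -
    show ?thesis by (rule lin_aux[OF A0 DB SCeq CC LCC NLC])
  qed
qed


context LS begin

lemma ocomp_UNIV_W:
  assumes S: "lie_subalg br S" and hS: "h \<subset> S"
  shows "ocomp UNIV S = W ({1..s} - Jidx s m h S)"
proof
  have JS: "Jidx s m h S = {i \<in> {1..s}. m i \<subseteq> S}" by (rule Jchar(1)[OF S hS])
  show "ocomp UNIV S \<subseteq> W ({1..s} - Jidx s m h S)"
  proof
    fix v assume v: "v \<in> ocomp UNIV S"
    have "v \<in> ocomp UNIV h" using v hS unfolding ocomp_def by blast
    then have vW: "v \<in> W {1..s}" using m_span unfolding W_def by simp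
    show "v \<in> W ({1..s} - Jidx s m h S)"
    proof (rule restrictW[OF order_refl _ vW])
      show "{1..s} - Jidx s m h S \<subseteq> {1..s}" by blast
      show "\<forall>i\<in>{1..s} - ({1..s} - Jidx s m h S). \<forall>c\<in>m i. inner v c = 0"
        using v JS unfolding ocomp_def by blast
    qed
  qed
  show "W ({1..s} - Jidx s m h S) \<subseteq> ocomp UNIV S"
  proof (rule W_sub_ocomp)
    show "subspace (ocomp UNIV S)" by (rule subspace_ocomp[OF subspace_UNIV])
    show "\<forall>i\<in>{1..s} - Jidx s m h S. m i \<subseteq> ocomp UNIV S"
    proof
      fix i assume i: "i \<in> {1..s} - Jidx s m h S"
      then have "\<not> m i \<subseteq> S" "i \<in> {1..s}" using JS by auto
      then have "\<forall>v\<in>m i. \<forall>z\<in>S. inner v z = 0" using dichotomy[OF S hS] by blast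
      then show "m i \<subseteq> ocomp UNIV S" unfolding ocomp_def by blast
    qed
  qed
qed

lemma gdiag_conv:
  assumes JK: "JK \<subseteq> {1..s}" and J: "J \<subseteq> JK"
    and gd: "\<forall>Y\<in>W JK. \<forall>Z\<in>W JK. gf Y Z = (\<Sum>i\<in>JK. x i * inner (proj (m i) Y) (proj (m i) Z))"
  shows "\<forall>Y\<in>W J. \<forall>Z\<in>W J. gf Y Z = Gf (Sigma J E) snd (\<lambda>p. x (fst p)) Y Z"
proof (intro ballI)
  fix Y Z assume Y: "Y \<in> W J" and Z: "Z \<in> W J"
  have Js: "J \<subseteq> {1..s}" using J JK by blast
  have finJK: "finite JK" using JK finite_subset by blast
  have finE: "\<forall>i\<in>JK. finite (E i)" using E_props JK by blast
  have "Y \<in> W JK" "Z \<in> W JK" using Y Z W_mono[OF J] by auto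
  then have "gf Y Z = (\<Sum>i\<in>JK. x i * inner (proj (m i) Y) (proj (m i) Z))" using gd by blast
  also have "\<dots> = (\<Sum>i\<in>JK. \<Sum>c\<in>E i. x i * inner Y c * inner Z c)"
    by (rule sum.cong[OF refl]) (use JK in \<open>auto simp: proj_inner_expand sum_distrib_left mult.assoc\<close>)
  also have "\<dots> = (\<Sum>p\<in>Sigma JK E. x (fst p) * inner Y (snd p) * inner Z (snd p))"
    by (simp add: sumSig[OF finJK finE])
  also have "\<dots> = (\<Sum>p\<in>Sigma J E. x (fst p) * inner Y (snd p) * inner Z (snd p))"
  proof (rule sum.mono_neutral_right)
    show "finite (Sigma JK E)" by (rule fin_Sigma[OF JK])
    show "Sigma J E \<subseteq> Sigma JK E" using J by blast
    show "\<forall>p\<in>Sigma JK E - Sigma J E. x (fst p) * inner Y (snd p) * inner Z (snd p) = 0"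
    proof
      fix p assume p: "p \<in> Sigma JK E - Sigma J E"
      then obtain i c where pic: "p = (i, c)" "i \<in> JK" "i \<notin> J" "c \<in> E i" by blast
      have "c \<in> m i" using E_props pic JK by blast
      then have "inner Y c = 0" using perpW[OF Js _ pic(3) Y] pic JK by blast
      then show "x (fst p) * inner Y (snd p) * inner Z (snd p) = 0" using pic by simp
    qed
  qed
  finally show "gf Y Z = Gf (Sigma J E) snd (\<lambda>p. x (fst p)) Y Z" unfolding Gf_def .
qed

end


theorem mainTheorem11:
  fixes br :: "'a::euclidean_space \<Rightarrow> 'a \<Rightarrow> 'a"
    and h K K' :: "'a set"
    and s :: nat and m :: "nat \<Rightarrow> 'a set"
    and gf :: "'a \<Rightarrow> 'a \<Rightarrow> real" and x :: "nat \<Rightarrow> real"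
  assumes lie: "lie_algebra br"
    and Qinv: "Q_ad_invariant br"
    and hsub: "lie_subalg br h"
    and dimM: "dim (ocomp UNIV h) \<ge> 3"
    and H: "hypH br h"
    and dec: "isotropy_decomp br h s m"
    and Ksub: "lie_subalg br K" and K'sub: "lie_subalg br K'"
    and hK': "h \<subset> K'" and K'K: "K' \<subset> K"
    and gM: "Mk br h K gf"
    and xpos: "\<forall>i\<in>Jidx s m h K. x i > 0"
    and gdiag: "\<forall>Y\<in>ocomp K h. \<forall>Z\<in>ocomp K h.
                  gf Y Z = (\<Sum>i\<in>Jidx s m h K. x i * inner (proj (m i) Y) (proj (m i) Z))"
  shows "Shat br h gf K =
           scal br gf (ocomp K' h) + scal br gf (ocomp K K')
           - 1/2 * (\<Sum>i\<in>Jidx s m h K. \<Sum>j\<in>{1..s} - Jidx s m h K. \<Sum>k\<in>{1..s} - Jidx s m h K.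
                      brkt br m i j k / x i)
           - 1/4 * (\<Sum>i\<in>Jidx s m h K - Jidx s m h K'. \<Sum>j\<in>Jidx s m h K - Jidx s m h K'.
                    \<Sum>k\<in>Jidx s m h K'.
                      brkt br m i j k * (x k / (x i * x j) + 2 * x i / (x j * x k)))
       \<and> Shat br h gf K \<le> Shat br h gf K' + scal br gf (ocomp K K')"
proof -
  interpret LS br h s m using lie Qinv hsub H dec by unfold_locales
  have hK: "h \<subset> K" using hK' K'K by blast
  define JK where "JK = Jidx s m h K"
  define N where "N = Jidx s m h K'"
  define L where "L = JK - N"
  define C where "C = {1..s} - JK"
  have JKc: "JK = {i \<in> {1..s}. m i \<subseteq> K}" using Jchar(1)[OF Ksub hK] unfolding JK_def .
  have Nc: "N = {i \<in> {1..s}. m i \<subseteq> K'}" using Jchar(1)[OF K'sub hK'] unfolding N_def .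
  have WK: "ocomp K h = W JK" using Jchar(2)[OF Ksub hK] unfolding JKc W_def by simp
  have WK': "ocomp K' h = W N" using Jchar(2)[OF K'sub hK'] unfolding Nc W_def by simp
  have NJK: "N \<subseteq> JK" using Nc JKc K'K by blast
  have JKs: "JK \<subseteq> {1..s}" using JKc by blast
  have Ns: "N \<subseteq> {1..s}" using Nc by blast
  have Ls: "L \<subseteq> {1..s}" using JKs unfolding L_def by blast
  have Cs: "C \<subseteq> {1..s}" unfolding C_def by blast
  have LC: "L \<union> C \<subseteq> {1..s}" using Ls Cs by blast
  have JKNL: "JK = N \<union> L" using NJK unfolding L_def by blast
  have CK': "{1..s} - N = L \<union> C" using NJK JKs unfolding L_def C_def by blast
  have OK: "ocomp UNIV K = W C" using ocomp_UNIV_W[OF Ksub hK] unfolding JK_def C_def .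
  have OK': "ocomp UNIV K' = W (L \<union> C)" using ocomp_UNIV_W[OF K'sub hK'] CK' unfolding N_def by simp
  have Ksp: "subspace K" using Ksub unfolding lie_subalg_def by blast
  have OKK: "ocomp K K' = W L"
  proof
    show "ocomp K K' \<subseteq> W L"
    proof
      fix v assume v: "v \<in> ocomp K K'"
      have "v \<in> ocomp K h" using v hK' unfolding ocomp_def by blast
      then have vW: "v \<in> W JK" using WK by simp
      show "v \<in> W L"
      proof (rule restrictW[OF JKs _ vW])
        show "L \<subseteq> JK" unfolding L_def by blast
        show "\<forall>i\<in>JK - L. \<forall>c\<in>m i. inner v c = 0"
          using v Nc NJK unfolding L_def ocomp_def by blast
      qed
    qed
    show "W L \<subseteq> ocomp K K'"
    proof (rule W_sub_ocomp)
      show "subspace (ocomp K K')" by (rule subspace_ocomp[OF Ksp])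
      show "\<forall>i\<in>L. m i \<subseteq> ocomp K K'"
      proof
        fix i assume i: "i \<in> L"
        then have "\<not> m i \<subseteq> K'" "i \<in> {1..s}" "m i \<subseteq> K" using Nc JKc unfolding L_def by auto
        then have "\<forall>v\<in>m i. \<forall>z\<in>K'. inner v z = 0" using dichotomy[OF K'sub hK'] by blast
        then show "m i \<subseteq> ocomp K K'" using \<open>m i \<subseteq> K\<close> unfolding ocomp_def by blast
      qed
    qed
  qed
  have gd: "\<forall>Y\<in>W JK. \<forall>Z\<in>W JK. gf Y Z = (\<Sum>i\<in>JK. x i * inner (proj (m i) Y) (proj (m i) Z))"
    using gdiag unfolding WK JK_def[symmetric] .
  have xJK: "\<forall>i\<in>JK. x i > 0" using xpos unfolding JK_def .
  have xN: "\<forall>i\<in>N. x i > 0" using xJK NJK by blast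
  have xL: "\<forall>i\<in>L. x i > 0" using xJK unfolding L_def by blast
  have hgJK: "\<forall>Y\<in>W JK. \<forall>Z\<in>W JK. gf Y Z = Gf (Sigma JK E) snd (\<lambda>p. x (fst p)) Y Z"
    by (rule gdiag_conv[OF JKs order_refl gd])
  have hgN: "\<forall>Y\<in>W N. \<forall>Z\<in>W N. gf Y Z = Gf (Sigma N E) snd (\<lambda>p. x (fst p)) Y Z"
    by (rule gdiag_conv[OF JKs NJK gd])
  have hgL: "\<forall>Y\<in>W L. \<forall>Z\<in>W L. gf Y Z = Gf (Sigma L E) snd (\<lambda>p. x (fst p)) Y Z"
    by (rule gdiag_conv[OF JKs _ gd]) (auto simp: L_def)
  have SK: "Shat br h gf K = SCf kap x bk JK - 1/2 * (\<Sum>i\<in>JK. \<Sum>j\<in>C. \<Sum>k\<in>C. bk i j k / x i)"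
    unfolding Shat_def WK OK scal_form[OF JKs xJK hgJK] cross_form[OF JKs Cs xJK hgJK] SCf_def ..
  have SK': "Shat br h gf K' = SCf kap x bk N - 1/2 * (\<Sum>i\<in>N. \<Sum>j\<in>L \<union> C. \<Sum>k\<in>L \<union> C. bk i j k / x i)"
    unfolding Shat_def WK' OK' scal_form[OF Ns xN hgN] cross_form[OF Ns LC xN hgN] SCf_def ..
  have SN: "scal br gf (ocomp K' h) = SCf kap x bk N"
    unfolding WK' scal_form[OF Ns xN hgN] SCf_def ..
  have SL: "scal br gf (ocomp K K') = SCf kap x bk L"
    unfolding OKK scal_form[OF Ls xL hgL] SCf_def ..
  have bsym: "brkt br m i j k = bk i j k" if "i \<in> {1..s}" for i j k
    using brkt_bk[OF that, of j k] bk_swap23[of j k i] bk_swap12[of j i k] by simp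
  have BR1: "(\<Sum>i\<in>JK. \<Sum>j\<in>C. \<Sum>k\<in>C. brkt br m i j k / x i) = (\<Sum>i\<in>JK. \<Sum>j\<in>C. \<Sum>k\<in>C. bk i j k / x i)"
    using JKs bsym by (intro sum.cong refl) auto
  have BR2: "(\<Sum>i\<in>L. \<Sum>j\<in>L. \<Sum>k\<in>N. brkt br m i j k * (x k / (x i * x j) + 2 * x i / (x j * x k)))
     = (\<Sum>i\<in>L. \<Sum>j\<in>L. \<Sum>k\<in>N. bk i j k * (x k / (x i * x j) + 2 * x i / (x j * x k)))"
    using Ls bsym by (intro sum.cong refl) auto
  have finN: "finite N" using Ns finite_subset by blast
  have finL: "finite L" using Ls finite_subset by blast
  have finC: "finite C" using Cs finite_subset by blast
  have d1: "N \<inter> L = {}" unfolding L_def by blast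
  have d2: "L \<inter> C = {}" unfolding L_def C_def by blast
  have d3: "N \<inter> C = {}" using NJK unfolding C_def by blast
  have xNL: "\<forall>i\<in>N \<union> L. x i > 0" using xN xL by blast
  have z1: "\<forall>i\<in>N. \<forall>j\<in>N. \<forall>k\<in>L. bk i j k = 0"
  proof (intro ballI)
    fix i j k assume i: "i \<in> N" and j: "j \<in> N" and k: "k \<in> L"
    have "\<not> m k \<subseteq> K'" "k \<in> {1..s}" using k Nc Ls unfolding L_def by auto
    then have "\<forall>v\<in>m k. \<forall>z\<in>K'. inner v z = 0" using dichotomy[OF K'sub hK'] by blast
    then show "bk i j k = 0" using bk_zero[OF K'sub] i j \<open>k \<in> {1..s}\<close> Nc by blast
  qed
  have z2: "\<forall>i\<in>N. \<forall>j\<in>L. \<forall>k\<in>C. bk i j k = 0"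
  proof (intro ballI)
    fix i j k assume i: "i \<in> N" and j: "j \<in> L" and k: "k \<in> C"
    have "\<not> m k \<subseteq> K" "k \<in> {1..s}" using k JKc unfolding C_def by auto
    then have kp: "\<forall>v\<in>m k. \<forall>z\<in>K. inner v z = 0" using dichotomy[OF Ksub hK] by blast
    have "i \<in> {1..s}" "m i \<subseteq> K" "j \<in> {1..s}" "m j \<subseteq> K" using i j NJK JKc unfolding L_def by auto
    then show "bk i j k = 0" using bk_zero[OF Ksub _ _ _ _ \<open>k \<in> {1..s}\<close> kp] by blast
  qed
  note AM = algebra_main[OF finN finL finC d1 d2 d3 bk_swap12 bk_swap23 bk_nonneg xNL z1 z2, of kap]
  have G1: "Shat br h gf K =
           scal br gf (ocomp K' h) + scal br gf (ocomp K K')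
           - 1/2 * (\<Sum>i\<in>JK. \<Sum>j\<in>C. \<Sum>k\<in>C. brkt br m i j k / x i)
           - 1/4 * (\<Sum>i\<in>L. \<Sum>j\<in>L. \<Sum>k\<in>N. brkt br m i j k * (x k / (x i * x j) + 2 * x i / (x j * x k)))"
    unfolding SK SN SL BR1 BR2 using AM(1) unfolding JKNL .
  have G2: "Shat br h gf K \<le> Shat br h gf K' + scal br gf (ocomp K K')"
    unfolding SK SK' SL using AM(2) unfolding JKNL .
  show ?thesis using G1 G2 unfolding JK_def N_def L_def C_def by simp
qed


end
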